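(* Let $N\ge 2$, let $s=(s_1,\dots,s_{N-1})\in\mathbb{C}^{N-1}$ be generic, set $x_a=2s_a-2s_{a-1}$ ($1\le a\le N$, $s_0=s_N=0$), and let $$F(s)=\mathbb{1}\otimes\mathbb{1}-\sum_{1\le a<b\le N}\frac{2}{x_a-x_b}\,E_{ab}\otimes E_{ba}.$$ Let $R(u)=\dfrac{\rho(u)}{u+1}\big(u\,\mathbb{1}\otimes\mathbb{1}+P\big)$ be the (normalised) Yang $R$-matrix of the double Yangian of $sl_N$ in the fundamental representation, with $$\rho(u)=\frac{\Gamma_1(u|N)\,\Gamma_1(u+N|N)}{\Gamma_1(u+1|N)\,\Gamma_1(u+N-1|N)}.$$ Then $R(u,s):=F_{21}(s)\,R(u)\,F_{12}(s)^{-1}$, written as $\sum R_{i_1i_2}^{j_1j_2}E_{i_1j_1}\otimes E_{i_2j_2}$, has non-vanishing entries ($1\le a,b\le N$, $a\ne b$ in the last two) $$R_{aa}^{aa}=\rho(u),\qquad R_{ab}^{ab}=\rho(u)\begin{cases}\dfrac{u}{u+1}& b>a,\\[2mm] \Big(1-\dfrac{4}{(x_a-x_b)^2}\Big)\dfrac{u}{u+1} & b<a,\end{cases}\qquad R_{ab}^{ba}=\rho(u)\Big(1+\frac{2u}{x_a-x_b}\Big)\frac{1}{u+1},$$ and it satisfies the dynamical Yang--Baxter equation with additive spectral parameter $$R_{12}(\beta,s+h^{(3)})\,R_{13}(\beta+\beta',s)\,R_{23}(\beta',s+h^{(1)})=R_{23}(\beta',s)\,R_{13}(\beta+\beta',s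+h^{(2)})\,R_{12}(\beta,s).$$
   Context: $E_{ab}$ is the $N\times N$ elementary matrix, $P$ the flip of $\mathbb{C}^N\otimes\mathbb{C}^N$, $F_{21}=PF_{12}P$. $\Gamma_1(x|\omega)=\frac{\omega^{x/\omega}}{\sqrt{2\pi\omega}}\Gamma(x/\omega)$. Shift notation: with $h_j=E_{jj}-E_{j+1,j+1}$, $(d_{ij})$ the inverse Cartan matrix of $sl_N$ and $h^\vee_i=\sum_j d_{ij}h_j$, the expression $R_{12}(\beta,s+h^{(3)})$ means $R_{12}(\beta,s)$ with each $s_i$ replaced by $s_i+h^\vee_i$ acting (diagonally) in the third tensor factor of $(\mathbb{C}^N)^{\otimes3}$; similarly for $h^{(1)},h^{(2)}$. *)

theory Defs
  imports "HOL-Analysis.Analysis"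
begin

text \<open>Operators on the k-fold tensor power of C^N are represented by their matrix
  entries: an index of the tensor power is a list of length k with entries in {1..N};
  M I J is the coefficient of E_{I!0 J!0} (x) ... (x) E_{I!(k-1) J!(k-1)}.
  All equalities of operators are stated entrywise on the index set.\<close>

type_synonym op = "nat list \<Rightarrow> nat list \<Rightarrow> complex"

definition idx :: "nat \<Rightarrow> nat \<Rightarrow> nat list set" where
  "idx N k = {I. length I = k \<and> set I \<subseteq> {1..N}}"

definition mmul :: "nat \<Rightarrow> nat \<Rightarrow> op \<Rightarrow> op \<Rightarrow> op" where
  "mmul N k A B = (\<lambda>I J. \<Sum>K\<in>idx N k. A I K * B K J)"

definition mone :: op where
  "mone = (\<lambda>I J. if I = J then 1 else 0)"

definition minv :: "nat \<Rightarrow> nat \<Rightarrow> op \<Rightarrow> op" where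
  "minv N k A = (SOME B. (\<forall>I J. (I \<notin> idx N k \<or> J \<notin> idx N k) \<longrightarrow> B I J = 0) \<and>
      (\<forall>I\<in>idx N k. \<forall>J\<in>idx N k. mmul N k A B I J = mone I J \<and> mmul N k B A I J = mone I J))"

definition elem :: "nat \<Rightarrow> nat \<Rightarrow> nat \<Rightarrow> nat \<Rightarrow> complex" where
  "elem a b i j = (if i = a \<and> j = b then 1 else 0)"

definition tens2 :: "(nat \<Rightarrow> nat \<Rightarrow> complex) \<Rightarrow> (nat \<Rightarrow> nat \<Rightarrow> complex) \<Rightarrow> op" where
  "tens2 A B = (\<lambda>I J. A (I!0) (J!0) * B (I!1) (J!1))"

definition flipP :: op where
  "flipP = (\<lambda>I J. if I!0 = J!1 \<and> I!1 = J!0 then 1 else 0)"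

definition xcoord :: "nat \<Rightarrow> (nat \<Rightarrow> complex) \<Rightarrow> nat \<Rightarrow> complex" where
  "xcoord N s a = (let sv = (\<lambda>i. if 1 \<le> i \<and> i \<le> N - 1 then s i else 0)
                   in 2 * sv a - 2 * sv (a - 1))"

definition Fmat :: "nat \<Rightarrow> (nat \<Rightarrow> complex) \<Rightarrow> op" where
  "Fmat N s = (\<lambda>I J. mone I J -
     (\<Sum>a\<in>{1..N}. \<Sum>b\<in>{a<..N}.
        2 / (xcoord N s a - xcoord N s b) * tens2 (elem a b) (elem b a) I J))"

definition Fmat21 :: "nat \<Rightarrow> (nat \<Rightarrow> complex) \<Rightarrow> op" where
  "Fmat21 N s = mmul N 2 flipP (mmul N 2 (Fmat N s) flipP)"

definition Gamma1 :: "complex \<Rightarrow> real \<Rightarrow> complex" where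
  "Gamma1 x \<omega> = (complex_of_real \<omega>) powr (x / complex_of_real \<omega>)
        / complex_of_real (sqrt (2 * pi * \<omega>)) * Gamma (x / complex_of_real \<omega>)"

definition rho :: "nat \<Rightarrow> complex \<Rightarrow> complex" where
  "rho N u = Gamma1 u (real N) * Gamma1 (u + of_nat N) (real N)
       / (Gamma1 (u + 1) (real N) * Gamma1 (u + of_nat N - 1) (real N))"

definition Ryang :: "nat \<Rightarrow> complex \<Rightarrow> op" where
  "Ryang N u = (\<lambda>I J. rho N u / (u + 1) * (u * mone I J + flipP I J))"

definition Rdyn :: "nat \<Rightarrow> complex \<Rightarrow> (nat \<Rightarrow> complex) \<Rightarrow> op" where
  "Rdyn N u s = mmul N 2 (Fmat21 N s) (mmul N 2 (Ryang N u) (minv N 2 (Fmat N s)))"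

definition invcartan :: "nat \<Rightarrow> nat \<Rightarrow> nat \<Rightarrow> complex" where
  "invcartan N i j = of_nat (min i j) - of_nat (i * j) / of_nat N"

text \<open>Eigenvalue of h^vee_i = sum_j d_ij h_j (h_j = E_jj - E_{j+1,j+1}) on basis vector e_c.\<close>
definition hvee_eig :: "nat \<Rightarrow> nat \<Rightarrow> nat \<Rightarrow> complex" where
  "hvee_eig N i c = (\<Sum>j\<in>{1..N-1}. invcartan N i j *
       ((if c = j then 1 else 0) - (if c = j + 1 then 1 else 0)))"

text \<open>s + h^vee evaluated on e_c: s_i replaced by s_i + (eigenvalue of h^vee_i on e_c).\<close>
definition sshift :: "nat \<Rightarrow> (nat \<Rightarrow> complex) \<Rightarrow> nat \<Rightarrow> nat \<Rightarrow> complex" where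
  "sshift N s c = (\<lambda>i. s i + hvee_eig N i c)"

text \<open>Embeddings into the triple tensor product; G c is the operator used when the
  remaining (spectator) factor is in basis state e_c (diagonal action).\<close>
definition lift12 :: "(nat \<Rightarrow> op) \<Rightarrow> op" where
  "lift12 G = (\<lambda>I J. if I!2 = J!2 then G (I!2) [I!0, I!1] [J!0, J!1] else 0)"

definition lift13 :: "(nat \<Rightarrow> op) \<Rightarrow> op" where
  "lift13 G = (\<lambda>I J. if I!1 = J!1 then G (I!1) [I!0, I!2] [J!0, J!2] else 0)"

definition lift23 :: "(nat \<Rightarrow> op) \<Rightarrow> op" where
  "lift23 G = (\<lambda>I J. if I!0 = J!0 then G (I!0) [I!1, I!2] [J!1, J!2] else 0)"

end

theory Submission
  imports Defs
begin

lemma finite_idx: "finite (idx N k)"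
proof -
  have "idx N k = {xs. set xs \<subseteq> {1..N} \<and> length xs = k}" unfolding idx_def by auto
  then show ?thesis using finite_lists_length_eq[of "{1..N}" k] by simp
qed

lemma idx2_iff: "I \<in> idx N 2 \<longleftrightarrow> (\<exists>p q. I = [p,q] \<and> p \<in> {1..N} \<and> q \<in> {1..N})"
proof
  assume "I \<in> idx N 2"
  then have "length I = 2" "set I \<subseteq> {1..N}" unfolding idx_def by auto
  then obtain p q where "I = [p,q]" by (metis (no_types) length_0_conv length_Suc_conv numeral_2_eq_2)
  then show "\<exists>p q. I = [p,q] \<and> p \<in> {1..N} \<and> q \<in> {1..N}" using \<open>set I \<subseteq> {1..N}\<close> by auto
qed (auto simp: idx_def)

lemma idx3_iff: "I \<in> idx N 3 \<longleftrightarrow> (\<exists>p q r. I = [p,q,r] \<and> p \<in> {1..N} \<and> q \<in> {1..N} \<and> r \<in> {1..N})"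
proof
  assume "I \<in> idx N 3"
  then have "length I = 3" "set I \<subseteq> {1..N}" unfolding idx_def by auto
  then obtain p q r where "I = [p,q,r]" by (metis (no_types) length_0_conv length_Suc_conv numeral_3_eq_3)
  then show "\<exists>p q r. I = [p,q,r] \<and> p \<in> {1..N} \<and> q \<in> {1..N} \<and> r \<in> {1..N}" using \<open>set I \<subseteq> {1..N}\<close> by auto
qed (auto simp: idx_def)

lemma idx2I: "p \<in> {1..N} \<Longrightarrow> q \<in> {1..N} \<Longrightarrow> [p,q] \<in> idx N 2"
  by (auto simp: idx_def)
lemma idx3I: "p \<in> {1..N} \<Longrightarrow> q \<in> {1..N} \<Longrightarrow> r \<in> {1..N} \<Longrightarrow> [p,q,r] \<in> idx N 3"
  by (auto simp: idx_def)

lemma mmul_row2: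
  assumes "I1 \<in> idx N k" "I2 \<in> idx N k"
    and "\<And>K. K \<in> idx N k \<Longrightarrow> A I K = (if K = I1 then \<alpha> else 0) + (if K = I2 then \<gamma> else 0)"
  shows "mmul N k A B I J = \<alpha> * B I1 J + \<gamma> * B I2 J"
proof -
  have "mmul N k A B I J = (\<Sum>K\<in>idx N k. (if K = I1 then \<alpha> * B K J else 0) + (if K = I2 then \<gamma> * B K J else 0))"
    unfolding mmul_def by (rule sum.cong) (auto simp: assms(3) distrib_right)
  also have "\<dots> = \<alpha> * B I1 J + \<gamma> * B I2 J"
    by (simp add: sum.distrib finite_idx assms(1,2))
  finally show ?thesis .
qed

lemma mmul_assoc: "mmul N k (mmul N k A B) C I J = mmul N k A (mmul N k B C) I J"
  unfolding mmul_def
  by (simp add: sum_distrib_left sum_distrib_right mult.assoc) (rule sum.swap)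

abbreviation XX where "XX N s \<equiv> xcoord N s"

definition gF :: "nat \<Rightarrow> (nat \<Rightarrow> complex) \<Rightarrow> nat \<Rightarrow> nat \<Rightarrow> complex" where
  "gF N s p q = (if p < q then 2 / (xcoord N s p - xcoord N s q) else 0)"

lemma tens2_elem: "tens2 (elem a b) (elem b a) [p,q] [k0,k1] =
    (if a = p then if b = q then if k0 = q \<and> k1 = p then 1 else 0 else 0 else 0)"
  by (auto simp: tens2_def elem_def)

lemma Fmat_row:
  assumes "p \<in> {1..N}" "q \<in> {1..N}" "K \<in> idx N 2"
  shows "Fmat N s [p,q] K = (if K = [p,q] then 1 else 0) + (if K = [q,p] then - gF N s p q else 0)"
proof -
  obtain k0 k1 where K: "K = [k0,k1]" using assms(3) by (auto simp: idx2_iff)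
  have pw: "2 / (xcoord N s a - xcoord N s b) * tens2 (elem a b) (elem b a) [p,q] [k0,k1] =
     (if a = p then (if b = q then (if k0 = q \<and> k1 = p then 2 / (xcoord N s a - xcoord N s b) else 0) else 0) else 0)" for a b
    by (simp add: tens2_elem)
  have sif: "\<And>P f B. (\<Sum>b\<in>B. if P then f b else 0) = (if P then (\<Sum>b\<in>B. f b) else (0::complex))" by auto
  have "(\<Sum>a\<in>{1..N}. \<Sum>b\<in>{a<..N}. 2 / (xcoord N s a - xcoord N s b) * tens2 (elem a b) (elem b a) [p,q] [k0,k1])
      = (\<Sum>a\<in>{1..N}. if a = p then (\<Sum>b\<in>{a<..N}. if b = q then (if k0 = q \<and> k1 = p then 2 / (xcoord N s a - xcoord N s b) else 0) else 0) else 0)"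
    by (simp only: pw sif)
  also have "\<dots> = (\<Sum>b\<in>{p<..N}. if b = q then (if k0 = q \<and> k1 = p then 2 / (xcoord N s p - xcoord N s b) else 0) else 0)"
    using assms(1) by (subst sum.delta) auto
  also have "\<dots> = (if p < q \<and> k0 = q \<and> k1 = p then 2 / (xcoord N s p - xcoord N s q) else 0)"
    using assms(1,2) by (subst sum.delta) auto
  finally have e: "(\<Sum>a\<in>{1..N}. \<Sum>b\<in>{a<..N}. 2 / (xcoord N s a - xcoord N s b) * tens2 (elem a b) (elem b a) [p,q] [k0,k1])
      = (if p < q \<and> k0 = q \<and> k1 = p then 2 / (xcoord N s p - xcoord N s q) else 0)" .
  have "Fmat N s [p,q] [k0,k1] = mone [p,q] [k0,k1] - (if p < q \<and> k0 = q \<and> k1 = p then 2 / (xcoord N s p - xcoord N s q) else 0)"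
    unfolding Fmat_def by (simp only: e)
  also have "\<dots> = (if [k0,k1] = [p,q] then 1 else 0) + (if [k0,k1] = [q,p] then - gF N s p q else 0)"
    unfolding mone_def gF_def
    by (cases "p < q"; cases "k0 = q"; cases "k1 = p"; cases "k0 = p"; cases "k1 = q") simp_all
  finally show ?thesis unfolding K .
qed

definition Finv :: "nat \<Rightarrow> (nat \<Rightarrow> complex) \<Rightarrow> op" where
  "Finv N s I J = (if I \<in> idx N 2 \<and> J \<in> idx N 2 then
      (if J = I then 1 else 0) + (if J = rev I then gF N s (I!0) (I!1) else 0) else 0)"

lemma Finv_row:
  assumes "p \<in> {1..N}" "q \<in> {1..N}" "K \<in> idx N 2"
  shows "Finv N s [p,q] K = (if K = [p,q] then 1 else 0) + (if K = [q,p] then gF N s p q else 0)"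
  using assms by (simp add: Finv_def idx2I)

lemma gF_prod: "gF N s p q * gF N s q p = 0"
  by (auto simp: gF_def)

lemma F_Finv:
  assumes "I \<in> idx N 2" "J \<in> idx N 2"
  shows "mmul N 2 (Fmat N s) (Finv N s) I J = mone I J" "mmul N 2 (Finv N s) (Fmat N s) I J = mone I J"
proof -
  obtain p q where I: "I = [p,q]" "p \<in> {1..N}" "q \<in> {1..N}" using assms(1) by (auto simp: idx2_iff)
  obtain j0 j1 where J: "J = [j0,j1]" "j0 \<in> {1..N}" "j1 \<in> {1..N}" using assms(2) by (auto simp: idx2_iff)
  have "mmul N 2 (Fmat N s) (Finv N s) I J = 1 * Finv N s [p,q] J + (- gF N s p q) * Finv N s [q,p] J"
    unfolding I(1) by (rule mmul_row2) (use I in \<open>auto simp: idx2I Fmat_row\<close>)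
  also have "\<dots> = mone I J"
    unfolding I(1) J(1) using I(2,3) J(2,3)
    apply (simp only: Finv_row idx2I)
    unfolding mone_def gF_def
    by (cases p q rule: linorder_cases; cases "j0 = q"; cases "j1 = p"; cases "j0 = p"; cases "j1 = q") simp_all
  finally show "mmul N 2 (Fmat N s) (Finv N s) I J = mone I J" .
  have "mmul N 2 (Finv N s) (Fmat N s) I J = 1 * Fmat N s [p,q] J + (gF N s p q) * Fmat N s [q,p] J"
    unfolding I(1) by (rule mmul_row2) (use I in \<open>auto simp: idx2I Finv_row\<close>)
  also have "\<dots> = mone I J"
    unfolding I(1) J(1) using I(2,3) J(2,3)
    apply (simp only: Fmat_row idx2I)
    unfolding mone_def gF_def
    by (cases p q rule: linorder_cases; cases "j0 = q"; cases "j1 = p"; cases "j0 = p"; cases "j1 = q") simp_all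
  finally show "mmul N 2 (Finv N s) (Fmat N s) I J = mone I J" .
qed

lemma mmul_mone_left: "I \<in> idx N k \<Longrightarrow> mmul N k mone B I J = B I J"
proof -
  assume "I \<in> idx N k"
  have "mmul N k mone B I J = (\<Sum>K\<in>idx N k. if I = K then B K J else 0)"
    unfolding mmul_def mone_def by (rule sum.cong) auto
  then show ?thesis using \<open>I \<in> idx N k\<close> by (simp add: finite_idx)
qed

lemma mmul_mone_right: "J \<in> idx N k \<Longrightarrow> mmul N k A mone I J = A I J"
proof -
  assume "J \<in> idx N k"
  have "mmul N k A mone I J = (\<Sum>K\<in>idx N k. if K = J then A I K else 0)"
    unfolding mmul_def mone_def by (rule sum.cong) auto
  then show ?thesis using \<open>J \<in> idx N k\<close> by (simp add: finite_idx)
qed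

lemma mmul_cong_left: "(\<And>K. K \<in> idx N k \<Longrightarrow> A I K = A' I K) \<Longrightarrow> mmul N k A B I J = mmul N k A' B I J"
  unfolding mmul_def by (rule sum.cong) auto
lemma mmul_cong_right: "(\<And>K. K \<in> idx N k \<Longrightarrow> B K J = B' K J) \<Longrightarrow> mmul N k A B I J = mmul N k A B' I J"
  unfolding mmul_def by (rule sum.cong) auto

lemma minv_Fmat:
  assumes "I \<in> idx N 2" "J \<in> idx N 2"
  shows "minv N 2 (Fmat N s) I J = Finv N s I J"
proof -
  let ?P = "\<lambda>B. (\<forall>I J. (I \<notin> idx N 2 \<or> J \<notin> idx N 2) \<longrightarrow> B I J = 0) \<and>
      (\<forall>I\<in>idx N 2. \<forall>J\<in>idx N 2. mmul N 2 (Fmat N s) B I J = mone I J \<and> mmul N 2 B (Fmat N s) I J = mone I J)"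
  have P1: "\<forall>I J. (I \<notin> idx N 2 \<or> J \<notin> idx N 2) \<longrightarrow> Finv N s I J = 0" by (simp add: Finv_def)
  have P2: "\<forall>I\<in>idx N 2. \<forall>J\<in>idx N 2. mmul N 2 (Fmat N s) (Finv N s) I J = mone I J \<and> mmul N 2 (Finv N s) (Fmat N s) I J = mone I J"
    using F_Finv by blast
  have "?P (Finv N s)" using P1 P2 by (rule conjI)
  then have "?P (SOME B. ?P B)" by (rule someI[where P="?P"])
  then have PB: "?P (minv N 2 (Fmat N s))" unfolding minv_def .
  let ?B = "minv N 2 (Fmat N s)"
  have PB2: "\<And>K. K \<in> idx N 2 \<Longrightarrow> mmul N 2 (Fmat N s) ?B K J = mone K J"
    using PB assms(2) by blast
  have "?B I J = mmul N 2 mone ?B I J" using assms by (simp add: mmul_mone_left)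
  also have "\<dots> = mmul N 2 (mmul N 2 (Finv N s) (Fmat N s)) ?B I J"
    by (rule mmul_cong_left) (simp add: F_Finv(2) assms)
  also have "\<dots> = mmul N 2 (Finv N s) (mmul N 2 (Fmat N s) ?B) I J" by (rule mmul_assoc)
  also have "\<dots> = mmul N 2 (Finv N s) mone I J"
    by (rule mmul_cong_right) (simp add: PB2)
  also have "\<dots> = Finv N s I J" using assms by (simp add: mmul_mone_right)
  finally show ?thesis .
qed

definition cw :: "(nat \<Rightarrow> complex) \<Rightarrow> nat \<Rightarrow> nat \<Rightarrow> complex" where
  "cw X p q = (if p \<le> q then 1 else 1 - 4 / (X p - X q)^2)"
definition ww :: "(nat \<Rightarrow> complex) \<Rightarrow> complex \<Rightarrow> nat \<Rightarrow> nat \<Rightarrow> complex" where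
  "ww X u p q = 1 + 2 * u / (X p - X q)"
definition rr :: "nat \<Rightarrow> complex \<Rightarrow> complex" where
  "rr N u = rho N u / (u + 1)"


lemma flip_row:
  assumes "K \<in> idx N 2"
  shows "flipP [p,q] K = (if K = [p,q] then 0 else 0) + (if K = [q,p] then 1 else 0)"
proof -
  obtain k0 k1 where K: "K = [k0,k1]" using assms by (auto simp: idx2_iff)
  show ?thesis unfolding K flipP_def by auto
qed

lemma Fmat21_row:
  assumes "p \<in> {1..N}" "q \<in> {1..N}" "K \<in> idx N 2"
  shows "Fmat21 N s [p,q] K = (if K = [p,q] then 1 else 0) + (if K = [q,p] then - gF N s q p else 0)"
proof -
  have "Fmat21 N s [p,q] K = 0 * mmul N 2 (Fmat N s) flipP [p,q] K + 1 * mmul N 2 (Fmat N s) flipP [q,p] K"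
    unfolding Fmat21_def by (rule mmul_row2) (use assms in \<open>simp_all add: idx2I flip_row\<close>)
  also have "\<dots> = mmul N 2 (Fmat N s) flipP [q,p] K" by simp
  also have "\<dots> = 1 * flipP [q,p] K + (- gF N s q p) * flipP [p,q] K"
    by (rule mmul_row2) (use assms in \<open>simp_all add: idx2I Fmat_row\<close>)
  also have "\<dots> = (if K = [p,q] then 1 else 0) + (if K = [q,p] then - gF N s q p else 0)"
    using assms(3) by (simp add: flip_row)
  finally show ?thesis .
qed
lemma Ryang_row:
  assumes "K \<in> idx N 2"
  shows "Ryang N u [p,q] K = (if K = [p,q] then rr N u * u else 0) + (if K = [q,p] then rr N u else 0)"
proof -
  obtain k0 k1 where K: "K = [k0,k1]" using assms by (auto simp: idx2_iff)
  show ?thesis unfolding K Ryang_def mone_def flipP_def rr_def[symmetric]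
    by (cases "k0 = p"; cases "k1 = q"; cases "k0 = q"; cases "k1 = p") (simp_all add: distrib_left)
qed

lemma two_div_swap: "(2::complex) / (b - a) = - (2 / (a - b))"
  by (metis minus_diff_eq divide_minus_right)

lemma Rdyn_entry:
  assumes "p \<in> {1..N}" "q \<in> {1..N}" "J \<in> idx N 2"
  shows "Rdyn N u s [p,q] J = rr N u * ((if J = [p,q] then u * cw (xcoord N s) p q else 0)
                                       + (if J = [q,p] then ww (xcoord N s) u p q else 0))"
proof -
  let ?M = "mmul N 2 (Ryang N u) (minv N 2 (Fmat N s))"
  have M: "?M [a,b] J = rr N u * u * Finv N s [a,b] J + rr N u * Finv N s [b,a] J"
    if "a \<in> {1..N}" "b \<in> {1..N}" for a b
  proof -
    have "?M [a,b] J = rr N u * u * minv N 2 (Fmat N s) [a,b] J + rr N u * minv N 2 (Fmat N s) [b,a] J"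
      by (rule mmul_row2) (use that in \<open>auto simp: idx2I Ryang_row\<close>)
    then show ?thesis using that assms(3) by (simp add: minv_Fmat idx2I)
  qed
  have "Rdyn N u s [p,q] J = 1 * ?M [p,q] J + (- gF N s q p) * ?M [q,p] J"
    unfolding Rdyn_def by (rule mmul_row2) (use assms in \<open>auto simp: idx2I Fmat21_row\<close>)
  also have "\<dots> = rr N u * (u * Finv N s [p,q] J + Finv N s [q,p] J
        - gF N s q p * (u * Finv N s [q,p] J + Finv N s [p,q] J))"
    unfolding M[OF assms(1,2)] M[OF assms(2,1)] by (simp add: algebra_simps)
  also have "\<dots> = rr N u * ((if J = [p,q] then u * cw (xcoord N s) p q else 0)
                                       + (if J = [q,p] then ww (xcoord N s) u p q else 0))"
  proof -
    obtain j0 j1 where J: "J = [j0,j1]" using assms(3) by (auto simp: idx2_iff)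
    define d where "d = xcoord N s p - xcoord N s q"
    have dq: "xcoord N s q - xcoord N s p = - d" unfolding d_def by simp
    have dd: "q = p \<Longrightarrow> d = 0" unfolding d_def by simp
    show ?thesis
      using assms(1,2,3) unfolding J
      apply (simp only: Finv_row)
      unfolding gF_def cw_def ww_def d_def[symmetric] dq
      by (cases p q rule: linorder_cases; cases "j0 = q"; cases "j1 = p"; cases "j0 = p"; cases "j1 = q"; cases "d = 0")
         (simp_all add: field_simps power2_eq_square dd)
  qed
  finally show ?thesis .
qed

lemma invcartan_0: "invcartan N 0 j = 0" "invcartan N i 0 = 0"
  by (simp_all add: invcartan_def)

lemma invcartan_N: "N > 0 \<Longrightarrow> i \<le> N \<Longrightarrow> invcartan N i N = 0"
  by (simp add: invcartan_def min_def)

lemma invcartan_N2: "N > 0 \<Longrightarrow> j \<le> N \<Longrightarrow> invcartan N N j = 0"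
  by (simp add: invcartan_def min_def)

lemma hvee_eig_eq:
  assumes "N > 0" "i \<le> N" "c \<in> {1..N}"
  shows "hvee_eig N i c = invcartan N i c - invcartan N i (c - 1)"
proof -
  have "hvee_eig N i c = (\<Sum>j\<in>{1..N-1}. if j = c then invcartan N i j else 0)
                        - (\<Sum>j\<in>{1..N-1}. if j = c - 1 then invcartan N i j else 0)"
    unfolding hvee_eig_def sum_subtractf[symmetric]
    using assms(3) by (intro sum.cong) auto
  also have "\<dots> = (if c \<in> {1..N-1} then invcartan N i c else 0) - (if c - 1 \<in> {1..N-1} then invcartan N i (c-1) else 0)"
    by (simp only: sum.delta finite_atLeastAtMost)
  also have "\<dots> = invcartan N i c - invcartan N i (c - 1)"
    using assms invcartan_N[OF assms(1,2)] invcartan_0 by (cases "c = N"; cases "c = 1") auto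
  finally show ?thesis .
qed

lemma hvee_eig_0: "N > 0 \<Longrightarrow> c \<in> {1..N} \<Longrightarrow> hvee_eig N 0 c = 0"
  by (simp add: hvee_eig_eq invcartan_0)

lemma hvee_eig_N: assumes "N > 0" "c \<in> {1..N}" shows "hvee_eig N N c = 0"
proof -
  have h: "c - 1 \<le> N" "c \<le> N" using assms by auto
  show ?thesis using invcartan_N2[OF assms(1) h(1)] invcartan_N2[OF assms(1) h(2)] assms by (simp add: hvee_eig_eq)
qed

lemma second_diff:
  assumes "N > 0" "a \<ge> 1" "c \<ge> 1"
  shows "invcartan N a c - invcartan N a (c - 1) - (invcartan N (a-1) c - invcartan N (a-1) (c-1))
         = (if a = c then 1 else 0) - 1 / of_nat N"
proof -
  obtain a' c' where ac: "a = Suc a'" "c = Suc c'" using assms by (metis Suc_pred' One_nat_def less_eq_Suc_le)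
  have m: "int (min (Suc a') (Suc c')) - int (min (Suc a') c') - int (min a' (Suc c')) + int (min a' c') = (if a' = c' then 1 else 0)"
    by (cases a' c' rule: linorder_cases) auto
  have m': "(of_nat (min (Suc a') (Suc c')) - of_nat (min (Suc a') c') - of_nat (min a' (Suc c')) + of_nat (min a' c') :: complex) = (if a' = c' then 1 else 0)"
  proof -
    have "(of_int (int (min (Suc a') (Suc c')) - int (min (Suc a') c') - int (min a' (Suc c')) + int (min a' c')) :: complex) = of_int (if a' = c' then 1 else 0)"
      using m by simp
    then show ?thesis by simp
  qed
  have P: "(of_nat (Suc a' * Suc c') - of_nat (Suc a' * c') - (of_nat (a' * Suc c') - of_nat (a' * c')) :: complex) = 1"
    by (simp add: algebra_simps)
  define M where "M = (\<lambda>i j. (of_nat (min i j) :: complex))"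
  define Q where "Q = (\<lambda>i j. (of_nat (i * j) :: complex))"
  define w where "w = 1 / (of_nat N :: complex)"
  have inv: "invcartan N i j = M i j - Q i j * w" for i j unfolding invcartan_def M_def Q_def w_def by simp
  have "invcartan N a c - invcartan N a (c - 1) - (invcartan N (a-1) c - invcartan N (a-1) (c-1))
      = (M (Suc a') (Suc c') - M (Suc a') c' - M a' (Suc c') + M a' c')
        - (Q (Suc a') (Suc c') - Q (Suc a') c' - (Q a' (Suc c') - Q a' c')) * w"
    unfolding inv ac by (simp add: algebra_simps)
  also have "\<dots> = (if a = c then 1 else 0) - 1 / of_nat N"
    using m' P unfolding M_def Q_def ac w_def by simp
  finally show ?thesis .
qed

lemma xcoord_shift:
  assumes "N > 0" "a \<in> {1..N}" "c \<in> {1..N}"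
  shows "xcoord N (sshift N s c) a = xcoord N s a + (if a = c then 2 else 0) - 2 / of_nat N"
proof -
  let ?sv = "\<lambda>i. if 1 \<le> i \<and> i \<le> N - 1 then s i else 0"
  let ?sv' = "\<lambda>i. if 1 \<le> i \<and> i \<le> N - 1 then sshift N s c i else 0"
  have sv': "?sv' i = ?sv i + hvee_eig N i c" if "i \<le> N" for i
  proof (cases "1 \<le> i \<and> i \<le> N - 1")
    case True then show ?thesis by (simp add: sshift_def)
  next
    case False
    then have "i = 0 \<or> i = N" using that by auto
    then show ?thesis using hvee_eig_0[OF assms(1,3)] hvee_eig_N[OF assms(1,3)] False by auto
  qed
  have "xcoord N (sshift N s c) a = 2 * ?sv' a - 2 * ?sv' (a - 1)" unfolding xcoord_def Let_def ..
  also have "\<dots> = 2 * ?sv a - 2 * ?sv (a - 1) + 2 * (hvee_eig N a c - hvee_eig N (a-1) c)"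
  proof -
    have A1: "?sv' a = ?sv a + hvee_eig N a c" by (rule sv') (use assms(2) in auto)
    have A2: "?sv' (a - 1) = ?sv (a - 1) + hvee_eig N (a - 1) c" by (rule sv') (use assms(2) in auto)
    show ?thesis by (simp only: A1 A2) (simp add: algebra_simps)
  qed
  also have "hvee_eig N a c - hvee_eig N (a-1) c = (if a = c then 1 else 0) - 1 / of_nat N"
  proof -
    have h1: "hvee_eig N a c = invcartan N a c - invcartan N a (c - 1)"
      by (rule hvee_eig_eq) (use assms in auto)
    have h2: "hvee_eig N (a - 1) c = invcartan N (a - 1) c - invcartan N (a - 1) (c - 1)"
      by (rule hvee_eig_eq) (use assms in auto)
    show ?thesis unfolding h1 h2 by (rule second_diff) (use assms in auto)
  qed
  also have "2 * ?sv a - 2 * ?sv (a - 1) = xcoord N s a" unfolding xcoord_def Let_def ..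
  finally show ?thesis by (simp add: algebra_simps)
qed

definition Sh :: "(nat \<Rightarrow> complex) \<Rightarrow> nat \<Rightarrow> nat \<Rightarrow> complex" where
  "Sh X c = (\<lambda>p. X p + (if p = c then 2 else 0))"
definition E12 :: "(nat \<Rightarrow> complex) \<Rightarrow> complex \<Rightarrow> nat list \<Rightarrow> (nat list \<Rightarrow> complex) \<Rightarrow> complex" where
  "E12 X u K B = u * cw X (K!0) (K!1) * B K + ww X u (K!0) (K!1) * B [K!1, K!0, K!2]"
definition E13 :: "(nat \<Rightarrow> complex) \<Rightarrow> complex \<Rightarrow> nat list \<Rightarrow> (nat list \<Rightarrow> complex) \<Rightarrow> complex" where
  "E13 X u K B = u * cw X (K!0) (K!2) * B K + ww X u (K!0) (K!2) * B [K!2, K!1, K!0]"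
definition E23 :: "(nat \<Rightarrow> complex) \<Rightarrow> complex \<Rightarrow> nat list \<Rightarrow> (nat list \<Rightarrow> complex) \<Rightarrow> complex" where
  "E23 X u K B = u * cw X (K!1) (K!2) * B K + ww X u (K!1) (K!2) * B [K!0, K!2, K!1]"
definition dl :: "nat list \<Rightarrow> nat list \<Rightarrow> complex" where "dl J K = (if K = J then 1 else 0)"
definition LHSf where "LHSf X \<beta> \<beta>' I J = E12 (Sh X (I!2)) \<beta> I (\<lambda>K. E13 X (\<beta>+\<beta>') K (\<lambda>L. E23 (Sh X (L!0)) \<beta>' L (dl J)))"
definition RHSf where "RHSf X \<beta> \<beta>' I J = E23 X \<beta>' I (\<lambda>K. E13 (Sh X (K!1)) (\<beta>+\<beta>') K (\<lambda>L. E12 X \<beta> L (dl J)))"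
definition gen :: "(nat \<Rightarrow> complex) \<Rightarrow> nat set \<Rightarrow> bool" where
  "gen X S = (\<forall>p\<in>S. \<forall>q\<in>S. p \<noteq> q \<longrightarrow> X p - X q \<notin> {0, 2, -2})"

lemma shift_iff: "((b::complex) + 2 = a) = (a - b = 2)" by (metis add.commute diff_add_cancel add_diff_cancel_left')

lemma shift_iff2: "(a = (b::complex) + 2) = (a - b = 2)" by (metis add.commute diff_add_cancel add_diff_cancel_left')

lemma ord_000:
  fixes X :: "nat \<Rightarrow> complex"
  assumes True and g: "gen X {x}"
  shows "LHSf X \<beta> \<beta>' [x,x,x] J = RHSf X \<beta> \<beta>' [x,x,x] J"
proof -
  have ne: True and ne2: True by simp_all
  have o: True by simp
  have c0: "LHSf X \<beta> \<beta>' [x,x,x] [x,x,x] = RHSf X \<beta> \<beta>' [x,x,x] [x,x,x]"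
    apply (simp only: LHSf_def RHSf_def E12_def E13_def E23_def dl_def Sh_def cw_def ww_def)
    apply (simp only: nth_Cons_0 nth_Cons_Suc numeral_2_eq_2 One_nat_def o list.inject if_True if_False simp_thms le_refl)
    apply simp
    apply (simp add: divide_simps ne ne2)?
    apply algebra?
    done
  show ?thesis
  proof (cases "J = [x,x,x]")
    case True
    then show ?thesis using c0 by auto
  next
    case False
    then have "[x,x,x] \<noteq> J" by auto
    then show ?thesis using assms by (simp add: LHSf_def RHSf_def E12_def E13_def E23_def dl_def)
  qed
qed

lemma ord_001:
  fixes X :: "nat \<Rightarrow> complex"
  assumes "x < y" and g: "gen X {x,y}"
  shows "LHSf X \<beta> \<beta>' [x,x,y] J = RHSf X \<beta> \<beta>' [x,x,y] J"
proof -
  have ne: "X x \<noteq> X y" "X x - X y \<noteq> 2" "X x - X y \<noteq> -2" "X y \<noteq> X x" "X y - X x \<noteq> 2" "X y - X x \<noteq> -2"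
    using g assms unfolding gen_def by auto
  have ne2: "X x + 2 \<noteq> X y" "X y \<noteq> X x + 2" "X y + 2 \<noteq> X x" "X x \<noteq> X y + 2"
    using ne by (simp_all add: shift_iff shift_iff2)
  have o: "x \<noteq> y" "y \<noteq> x" "x \<le> y" "\<not> y \<le> x" using assms by auto
  have c0: "LHSf X \<beta> \<beta>' [x,x,y] [x,x,y] = RHSf X \<beta> \<beta>' [x,x,y] [x,x,y]"
    apply (simp only: LHSf_def RHSf_def E12_def E13_def E23_def dl_def Sh_def cw_def ww_def)
    apply (simp only: nth_Cons_0 nth_Cons_Suc numeral_2_eq_2 One_nat_def o list.inject if_True if_False simp_thms le_refl)
    apply simp
    apply (simp add: divide_simps ne ne2)?
    apply algebra?
    done
  have c1: "LHSf X \<beta> \<beta>' [x,x,y] [x,y,x] = RHSf X \<beta> \<beta>' [x,x,y] [x,y,x]"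
    apply (simp only: LHSf_def RHSf_def E12_def E13_def E23_def dl_def Sh_def cw_def ww_def)
    apply (simp only: nth_Cons_0 nth_Cons_Suc numeral_2_eq_2 One_nat_def o list.inject if_True if_False simp_thms le_refl)
    apply simp
    apply (simp add: divide_simps ne ne2)?
    apply algebra?
    done
  have c2: "LHSf X \<beta> \<beta>' [x,x,y] [y,x,x] = RHSf X \<beta> \<beta>' [x,x,y] [y,x,x]"
    apply (simp only: LHSf_def RHSf_def E12_def E13_def E23_def dl_def Sh_def cw_def ww_def)
    apply (simp only: nth_Cons_0 nth_Cons_Suc numeral_2_eq_2 One_nat_def o list.inject if_True if_False simp_thms le_refl)
    apply simp
    apply (simp add: divide_simps ne ne2)?
    apply algebra?
    done
  show ?thesis
  proof (cases "J = [x,x,y] \<or> J = [x,y,x] \<or> J = [y,x,x]")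
    case True
    then show ?thesis using c0 c1 c2 by auto
  next
    case False
    then have "[x,x,y] \<noteq> J" "[x,y,x] \<noteq> J" "[y,x,x] \<noteq> J" by auto
    then show ?thesis using assms by (simp add: LHSf_def RHSf_def E12_def E13_def E23_def dl_def)
  qed
qed

lemma ord_010:
  fixes X :: "nat \<Rightarrow> complex"
  assumes "x < y" and g: "gen X {x,y}"
  shows "LHSf X \<beta> \<beta>' [x,y,x] J = RHSf X \<beta> \<beta>' [x,y,x] J"
proof -
  have ne: "X x \<noteq> X y" "X x - X y \<noteq> 2" "X x - X y \<noteq> -2" "X y \<noteq> X x" "X y - X x \<noteq> 2" "X y - X x \<noteq> -2"
    using g assms unfolding gen_def by auto
  have ne2: "X x + 2 \<noteq> X y" "X y \<noteq> X x + 2" "X y + 2 \<noteq> X x" "X x \<noteq> X y + 2"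
    using ne by (simp_all add: shift_iff shift_iff2)
  have o: "x \<noteq> y" "y \<noteq> x" "x \<le> y" "\<not> y \<le> x" using assms by auto
  have c0: "LHSf X \<beta> \<beta>' [x,y,x] [x,y,x] = RHSf X \<beta> \<beta>' [x,y,x] [x,y,x]"
    apply (simp only: LHSf_def RHSf_def E12_def E13_def E23_def dl_def Sh_def cw_def ww_def)
    apply (simp only: nth_Cons_0 nth_Cons_Suc numeral_2_eq_2 One_nat_def o list.inject if_True if_False simp_thms le_refl)
    apply simp
    apply (simp add: divide_simps ne ne2)?
    apply algebra?
    done
  have c1: "LHSf X \<beta> \<beta>' [x,y,x] [x,x,y] = RHSf X \<beta> \<beta>' [x,y,x] [x,x,y]"
    apply (simp only: LHSf_def RHSf_def E12_def E13_def E23_def dl_def Sh_def cw_def ww_def)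
    apply (simp only: nth_Cons_0 nth_Cons_Suc numeral_2_eq_2 One_nat_def o list.inject if_True if_False simp_thms le_refl)
    apply simp
    apply (simp add: divide_simps ne ne2)?
    apply algebra?
    done
  have c2: "LHSf X \<beta> \<beta>' [x,y,x] [y,x,x] = RHSf X \<beta> \<beta>' [x,y,x] [y,x,x]"
    apply (simp only: LHSf_def RHSf_def E12_def E13_def E23_def dl_def Sh_def cw_def ww_def)
    apply (simp only: nth_Cons_0 nth_Cons_Suc numeral_2_eq_2 One_nat_def o list.inject if_True if_False simp_thms le_refl)
    apply simp
    apply (simp add: divide_simps ne ne2)?
    apply algebra?
    done
  show ?thesis
  proof (cases "J = [x,y,x] \<or> J = [x,x,y] \<or> J = [y,x,x]")
    case True
    then show ?thesis using c0 c1 c2 by auto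
  next
    case False
    then have "[x,y,x] \<noteq> J" "[x,x,y] \<noteq> J" "[y,x,x] \<noteq> J" by auto
    then show ?thesis using assms by (simp add: LHSf_def RHSf_def E12_def E13_def E23_def dl_def)
  qed
qed

lemma ord_011:
  fixes X :: "nat \<Rightarrow> complex"
  assumes "x < y" and g: "gen X {x,y}"
  shows "LHSf X \<beta> \<beta>' [x,y,y] J = RHSf X \<beta> \<beta>' [x,y,y] J"
proof -
  have ne: "X x \<noteq> X y" "X x - X y \<noteq> 2" "X x - X y \<noteq> -2" "X y \<noteq> X x" "X y - X x \<noteq> 2" "X y - X x \<noteq> -2"
    using g assms unfolding gen_def by auto
  have ne2: "X x + 2 \<noteq> X y" "X y \<noteq> X x + 2" "X y + 2 \<noteq> X x" "X x \<noteq> X y + 2"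
    using ne by (simp_all add: shift_iff shift_iff2)
  have o: "x \<noteq> y" "y \<noteq> x" "x \<le> y" "\<not> y \<le> x" using assms by auto
  have c0: "LHSf X \<beta> \<beta>' [x,y,y] [x,y,y] = RHSf X \<beta> \<beta>' [x,y,y] [x,y,y]"
    apply (simp only: LHSf_def RHSf_def E12_def E13_def E23_def dl_def Sh_def cw_def ww_def)
    apply (simp only: nth_Cons_0 nth_Cons_Suc numeral_2_eq_2 One_nat_def o list.inject if_True if_False simp_thms le_refl)
    apply simp
    apply (simp add: divide_simps ne ne2)?
    apply algebra?
    done
  have c1: "LHSf X \<beta> \<beta>' [x,y,y] [y,x,y] = RHSf X \<beta> \<beta>' [x,y,y] [y,x,y]"
    apply (simp only: LHSf_def RHSf_def E12_def E13_def E23_def dl_def Sh_def cw_def ww_def)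
    apply (simp only: nth_Cons_0 nth_Cons_Suc numeral_2_eq_2 One_nat_def o list.inject if_True if_False simp_thms le_refl)
    apply simp
    apply (simp add: divide_simps ne ne2)?
    apply algebra?
    done
  have c2: "LHSf X \<beta> \<beta>' [x,y,y] [y,y,x] = RHSf X \<beta> \<beta>' [x,y,y] [y,y,x]"
    apply (simp only: LHSf_def RHSf_def E12_def E13_def E23_def dl_def Sh_def cw_def ww_def)
    apply (simp only: nth_Cons_0 nth_Cons_Suc numeral_2_eq_2 One_nat_def o list.inject if_True if_False simp_thms le_refl)
    apply simp
    apply (simp add: divide_simps ne ne2)?
    apply algebra?
    done
  show ?thesis
  proof (cases "J = [x,y,y] \<or> J = [y,x,y] \<or> J = [y,y,x]")
    case True
    then show ?thesis using c0 c1 c2 by auto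
  next
    case False
    then have "[x,y,y] \<noteq> J" "[y,x,y] \<noteq> J" "[y,y,x] \<noteq> J" by auto
    then show ?thesis using assms by (simp add: LHSf_def RHSf_def E12_def E13_def E23_def dl_def)
  qed
qed

lemma ord_012:
  fixes X :: "nat \<Rightarrow> complex"
  assumes "x < y" "y < z" and g: "gen X {x,y,z}"
  shows "LHSf X \<beta> \<beta>' [x,y,z] J = RHSf X \<beta> \<beta>' [x,y,z] J"
proof -
  have ne: "X x \<noteq> X y" "X x - X y \<noteq> 2" "X x - X y \<noteq> -2" "X x \<noteq> X z" "X x - X z \<noteq> 2" "X x - X z \<noteq> -2" "X y \<noteq> X x" "X y - X x \<noteq> 2" "X y - X x \<noteq> -2" "X y \<noteq> X z" "X y - X z \<noteq> 2" "X y - X z \<noteq> -2" "X z \<noteq> X x" "X z - X x \<noteq> 2" "X z - X x \<noteq> -2" "X z \<noteq> X y" "X z - X y \<noteq> 2" "X z - X y \<noteq> -2"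
    using g assms unfolding gen_def by auto
  have ne2: "X x + 2 \<noteq> X y" "X y \<noteq> X x + 2" "X x + 2 \<noteq> X z" "X z \<noteq> X x + 2" "X y + 2 \<noteq> X x" "X x \<noteq> X y + 2" "X y + 2 \<noteq> X z" "X z \<noteq> X y + 2" "X z + 2 \<noteq> X x" "X x \<noteq> X z + 2" "X z + 2 \<noteq> X y" "X y \<noteq> X z + 2"
    using ne by (simp_all add: shift_iff shift_iff2)
  have o: "x \<noteq> y" "y \<noteq> x" "x \<le> y" "\<not> y \<le> x" "x \<noteq> z" "z \<noteq> x" "x \<le> z" "\<not> z \<le> x" "y \<noteq> z" "z \<noteq> y" "y \<le> z" "\<not> z \<le> y" using assms by auto
  have c0: "LHSf X \<beta> \<beta>' [x,y,z] [x,y,z] = RHSf X \<beta> \<beta>' [x,y,z] [x,y,z]"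
    apply (simp only: LHSf_def RHSf_def E12_def E13_def E23_def dl_def Sh_def cw_def ww_def)
    apply (simp only: nth_Cons_0 nth_Cons_Suc numeral_2_eq_2 One_nat_def o list.inject if_True if_False simp_thms le_refl)
    apply simp
    apply (simp add: divide_simps ne ne2)?
    apply algebra?
    done
  have c1: "LHSf X \<beta> \<beta>' [x,y,z] [x,z,y] = RHSf X \<beta> \<beta>' [x,y,z] [x,z,y]"
    apply (simp only: LHSf_def RHSf_def E12_def E13_def E23_def dl_def Sh_def cw_def ww_def)
    apply (simp only: nth_Cons_0 nth_Cons_Suc numeral_2_eq_2 One_nat_def o list.inject if_True if_False simp_thms le_refl)
    apply simp
    apply (simp add: divide_simps ne ne2)?
    apply algebra?
    done
  have c2: "LHSf X \<beta> \<beta>' [x,y,z] [y,x,z] = RHSf X \<beta> \<beta>' [x,y,z] [y,x,z]"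
    apply (simp only: LHSf_def RHSf_def E12_def E13_def E23_def dl_def Sh_def cw_def ww_def)
    apply (simp only: nth_Cons_0 nth_Cons_Suc numeral_2_eq_2 One_nat_def o list.inject if_True if_False simp_thms le_refl)
    apply simp
    apply (simp add: divide_simps ne ne2)?
    apply algebra?
    done
  have c3: "LHSf X \<beta> \<beta>' [x,y,z] [y,z,x] = RHSf X \<beta> \<beta>' [x,y,z] [y,z,x]"
    apply (simp only: LHSf_def RHSf_def E12_def E13_def E23_def dl_def Sh_def cw_def ww_def)
    apply (simp only: nth_Cons_0 nth_Cons_Suc numeral_2_eq_2 One_nat_def o list.inject if_True if_False simp_thms le_refl)
    apply simp
    apply (simp add: divide_simps ne ne2)?
    apply algebra?
    done
  have c4: "LHSf X \<beta> \<beta>' [x,y,z] [z,x,y] = RHSf X \<beta> \<beta>' [x,y,z] [z,x,y]"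
    apply (simp only: LHSf_def RHSf_def E12_def E13_def E23_def dl_def Sh_def cw_def ww_def)
    apply (simp only: nth_Cons_0 nth_Cons_Suc numeral_2_eq_2 One_nat_def o list.inject if_True if_False simp_thms le_refl)
    apply simp
    apply (simp add: divide_simps ne ne2)?
    apply algebra?
    done
  have c5: "LHSf X \<beta> \<beta>' [x,y,z] [z,y,x] = RHSf X \<beta> \<beta>' [x,y,z] [z,y,x]"
    apply (simp only: LHSf_def RHSf_def E12_def E13_def E23_def dl_def Sh_def cw_def ww_def)
    apply (simp only: nth_Cons_0 nth_Cons_Suc numeral_2_eq_2 One_nat_def o list.inject if_True if_False simp_thms le_refl)
    apply simp
    apply (simp add: divide_simps ne ne2)?
    apply algebra?
    done
  show ?thesis
  proof (cases "J = [x,y,z] \<or> J = [x,z,y] \<or> J = [y,x,z] \<or> J = [y,z,x] \<or> J = [z,x,y] \<or> J = [z,y,x]")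
    case True
    then show ?thesis using c0 c1 c2 c3 c4 c5 by auto
  next
    case False
    then have "[x,y,z] \<noteq> J" "[x,z,y] \<noteq> J" "[y,x,z] \<noteq> J" "[y,z,x] \<noteq> J" "[z,x,y] \<noteq> J" "[z,y,x] \<noteq> J" by auto
    then show ?thesis using assms by (simp add: LHSf_def RHSf_def E12_def E13_def E23_def dl_def)
  qed
qed

lemma ord_021:
  fixes X :: "nat \<Rightarrow> complex"
  assumes "x < y" "y < z" and g: "gen X {x,y,z}"
  shows "LHSf X \<beta> \<beta>' [x,z,y] J = RHSf X \<beta> \<beta>' [x,z,y] J"
proof -
  have ne: "X x \<noteq> X y" "X x - X y \<noteq> 2" "X x - X y \<noteq> -2" "X x \<noteq> X z" "X x - X z \<noteq> 2" "X x - X z \<noteq> -2" "X y \<noteq> X x" "X y - X x \<noteq> 2" "X y - X x \<noteq> -2" "X y \<noteq> X z" "X y - X z \<noteq> 2" "X y - X z \<noteq> -2" "X z \<noteq> X x" "X z - X x \<noteq> 2" "X z - X x \<noteq> -2" "X z \<noteq> X y" "X z - X y \<noteq> 2" "X z - X y \<noteq> -2"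
    using g assms unfolding gen_def by auto
  have ne2: "X x + 2 \<noteq> X y" "X y \<noteq> X x + 2" "X x + 2 \<noteq> X z" "X z \<noteq> X x + 2" "X y + 2 \<noteq> X x" "X x \<noteq> X y + 2" "X y + 2 \<noteq> X z" "X z \<noteq> X y + 2" "X z + 2 \<noteq> X x" "X x \<noteq> X z + 2" "X z + 2 \<noteq> X y" "X y \<noteq> X z + 2"
    using ne by (simp_all add: shift_iff shift_iff2)
  have o: "x \<noteq> y" "y \<noteq> x" "x \<le> y" "\<not> y \<le> x" "x \<noteq> z" "z \<noteq> x" "x \<le> z" "\<not> z \<le> x" "y \<noteq> z" "z \<noteq> y" "y \<le> z" "\<not> z \<le> y" using assms by auto
  have c0: "LHSf X \<beta> \<beta>' [x,z,y] [x,z,y] = RHSf X \<beta> \<beta>' [x,z,y] [x,z,y]"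
    apply (simp only: LHSf_def RHSf_def E12_def E13_def E23_def dl_def Sh_def cw_def ww_def)
    apply (simp only: nth_Cons_0 nth_Cons_Suc numeral_2_eq_2 One_nat_def o list.inject if_True if_False simp_thms le_refl)
    apply simp
    apply (simp add: divide_simps ne ne2)?
    apply algebra?
    done
  have c1: "LHSf X \<beta> \<beta>' [x,z,y] [x,y,z] = RHSf X \<beta> \<beta>' [x,z,y] [x,y,z]"
    apply (simp only: LHSf_def RHSf_def E12_def E13_def E23_def dl_def Sh_def cw_def ww_def)
    apply (simp only: nth_Cons_0 nth_Cons_Suc numeral_2_eq_2 One_nat_def o list.inject if_True if_False simp_thms le_refl)
    apply simp
    apply (simp add: divide_simps ne ne2)?
    apply algebra?
    done
  have c2: "LHSf X \<beta> \<beta>' [x,z,y] [z,x,y] = RHSf X \<beta> \<beta>' [x,z,y] [z,x,y]"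
    apply (simp only: LHSf_def RHSf_def E12_def E13_def E23_def dl_def Sh_def cw_def ww_def)
    apply (simp only: nth_Cons_0 nth_Cons_Suc numeral_2_eq_2 One_nat_def o list.inject if_True if_False simp_thms le_refl)
    apply simp
    apply (simp add: divide_simps ne ne2)?
    apply algebra?
    done
  have c3: "LHSf X \<beta> \<beta>' [x,z,y] [z,y,x] = RHSf X \<beta> \<beta>' [x,z,y] [z,y,x]"
    apply (simp only: LHSf_def RHSf_def E12_def E13_def E23_def dl_def Sh_def cw_def ww_def)
    apply (simp only: nth_Cons_0 nth_Cons_Suc numeral_2_eq_2 One_nat_def o list.inject if_True if_False simp_thms le_refl)
    apply simp
    apply (simp add: divide_simps ne ne2)?
    apply algebra?
    done
  have c4: "LHSf X \<beta> \<beta>' [x,z,y] [y,x,z] = RHSf X \<beta> \<beta>' [x,z,y] [y,x,z]"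
    apply (simp only: LHSf_def RHSf_def E12_def E13_def E23_def dl_def Sh_def cw_def ww_def)
    apply (simp only: nth_Cons_0 nth_Cons_Suc numeral_2_eq_2 One_nat_def o list.inject if_True if_False simp_thms le_refl)
    apply simp
    apply (simp add: divide_simps ne ne2)?
    apply algebra?
    done
  have c5: "LHSf X \<beta> \<beta>' [x,z,y] [y,z,x] = RHSf X \<beta> \<beta>' [x,z,y] [y,z,x]"
    apply (simp only: LHSf_def RHSf_def E12_def E13_def E23_def dl_def Sh_def cw_def ww_def)
    apply (simp only: nth_Cons_0 nth_Cons_Suc numeral_2_eq_2 One_nat_def o list.inject if_True if_False simp_thms le_refl)
    apply simp
    apply (simp add: divide_simps ne ne2)?
    apply algebra?
    done
  show ?thesis
  proof (cases "J = [x,z,y] \<or> J = [x,y,z] \<or> J = [z,x,y] \<or> J = [z,y,x] \<or> J = [y,x,z] \<or> J = [y,z,x]")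
    case True
    then show ?thesis using c0 c1 c2 c3 c4 c5 by auto
  next
    case False
    then have "[x,z,y] \<noteq> J" "[x,y,z] \<noteq> J" "[z,x,y] \<noteq> J" "[z,y,x] \<noteq> J" "[y,x,z] \<noteq> J" "[y,z,x] \<noteq> J" by auto
    then show ?thesis using assms by (simp add: LHSf_def RHSf_def E12_def E13_def E23_def dl_def)
  qed
qed

lemma ord_100:
  fixes X :: "nat \<Rightarrow> complex"
  assumes "x < y" and g: "gen X {x,y}"
  shows "LHSf X \<beta> \<beta>' [y,x,x] J = RHSf X \<beta> \<beta>' [y,x,x] J"
proof -
  have ne: "X x \<noteq> X y" "X x - X y \<noteq> 2" "X x - X y \<noteq> -2" "X y \<noteq> X x" "X y - X x \<noteq> 2" "X y - X x \<noteq> -2"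
    using g assms unfolding gen_def by auto
  have ne2: "X x + 2 \<noteq> X y" "X y \<noteq> X x + 2" "X y + 2 \<noteq> X x" "X x \<noteq> X y + 2"
    using ne by (simp_all add: shift_iff shift_iff2)
  have o: "x \<noteq> y" "y \<noteq> x" "x \<le> y" "\<not> y \<le> x" using assms by auto
  have c0: "LHSf X \<beta> \<beta>' [y,x,x] [y,x,x] = RHSf X \<beta> \<beta>' [y,x,x] [y,x,x]"
    apply (simp only: LHSf_def RHSf_def E12_def E13_def E23_def dl_def Sh_def cw_def ww_def)
    apply (simp only: nth_Cons_0 nth_Cons_Suc numeral_2_eq_2 One_nat_def o list.inject if_True if_False simp_thms le_refl)
    apply simp
    apply (simp add: divide_simps ne ne2)?
    apply algebra?
    done
  have c1: "LHSf X \<beta> \<beta>' [y,x,x] [x,y,x] = RHSf X \<beta> \<beta>' [y,x,x] [x,y,x]"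
    apply (simp only: LHSf_def RHSf_def E12_def E13_def E23_def dl_def Sh_def cw_def ww_def)
    apply (simp only: nth_Cons_0 nth_Cons_Suc numeral_2_eq_2 One_nat_def o list.inject if_True if_False simp_thms le_refl)
    apply simp
    apply (simp add: divide_simps ne ne2)?
    apply algebra?
    done
  have c2: "LHSf X \<beta> \<beta>' [y,x,x] [x,x,y] = RHSf X \<beta> \<beta>' [y,x,x] [x,x,y]"
    apply (simp only: LHSf_def RHSf_def E12_def E13_def E23_def dl_def Sh_def cw_def ww_def)
    apply (simp only: nth_Cons_0 nth_Cons_Suc numeral_2_eq_2 One_nat_def o list.inject if_True if_False simp_thms le_refl)
    apply simp
    apply (simp add: divide_simps ne ne2)?
    apply algebra?
    done
  show ?thesis
  proof (cases "J = [y,x,x] \<or> J = [x,y,x] \<or> J = [x,x,y]")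
    case True
    then show ?thesis using c0 c1 c2 by auto
  next
    case False
    then have "[y,x,x] \<noteq> J" "[x,y,x] \<noteq> J" "[x,x,y] \<noteq> J" by auto
    then show ?thesis using assms by (simp add: LHSf_def RHSf_def E12_def E13_def E23_def dl_def)
  qed
qed

lemma ord_101:
  fixes X :: "nat \<Rightarrow> complex"
  assumes "x < y" and g: "gen X {x,y}"
  shows "LHSf X \<beta> \<beta>' [y,x,y] J = RHSf X \<beta> \<beta>' [y,x,y] J"
proof -
  have ne: "X x \<noteq> X y" "X x - X y \<noteq> 2" "X x - X y \<noteq> -2" "X y \<noteq> X x" "X y - X x \<noteq> 2" "X y - X x \<noteq> -2"
    using g assms unfolding gen_def by auto
  have ne2: "X x + 2 \<noteq> X y" "X y \<noteq> X x + 2" "X y + 2 \<noteq> X x" "X x \<noteq> X y + 2"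
    using ne by (simp_all add: shift_iff shift_iff2)
  have o: "x \<noteq> y" "y \<noteq> x" "x \<le> y" "\<not> y \<le> x" using assms by auto
  have c0: "LHSf X \<beta> \<beta>' [y,x,y] [y,x,y] = RHSf X \<beta> \<beta>' [y,x,y] [y,x,y]"
    apply (simp only: LHSf_def RHSf_def E12_def E13_def E23_def dl_def Sh_def cw_def ww_def)
    apply (simp only: nth_Cons_0 nth_Cons_Suc numeral_2_eq_2 One_nat_def o list.inject if_True if_False simp_thms le_refl)
    apply simp
    apply (simp add: divide_simps ne ne2)?
    apply algebra?
    done
  have c1: "LHSf X \<beta> \<beta>' [y,x,y] [y,y,x] = RHSf X \<beta> \<beta>' [y,x,y] [y,y,x]"
    apply (simp only: LHSf_def RHSf_def E12_def E13_def E23_def dl_def Sh_def cw_def ww_def)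
    apply (simp only: nth_Cons_0 nth_Cons_Suc numeral_2_eq_2 One_nat_def o list.inject if_True if_False simp_thms le_refl)
    apply simp
    apply (simp add: divide_simps ne ne2)?
    apply algebra?
    done
  have c2: "LHSf X \<beta> \<beta>' [y,x,y] [x,y,y] = RHSf X \<beta> \<beta>' [y,x,y] [x,y,y]"
    apply (simp only: LHSf_def RHSf_def E12_def E13_def E23_def dl_def Sh_def cw_def ww_def)
    apply (simp only: nth_Cons_0 nth_Cons_Suc numeral_2_eq_2 One_nat_def o list.inject if_True if_False simp_thms le_refl)
    apply simp
    apply (simp add: divide_simps ne ne2)?
    apply algebra?
    done
  show ?thesis
  proof (cases "J = [y,x,y] \<or> J = [y,y,x] \<or> J = [x,y,y]")
    case True
    then show ?thesis using c0 c1 c2 by auto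
  next
    case False
    then have "[y,x,y] \<noteq> J" "[y,y,x] \<noteq> J" "[x,y,y] \<noteq> J" by auto
    then show ?thesis using assms by (simp add: LHSf_def RHSf_def E12_def E13_def E23_def dl_def)
  qed
qed

lemma ord_102:
  fixes X :: "nat \<Rightarrow> complex"
  assumes "x < y" "y < z" and g: "gen X {x,y,z}"
  shows "LHSf X \<beta> \<beta>' [y,x,z] J = RHSf X \<beta> \<beta>' [y,x,z] J"
proof -
  have ne: "X x \<noteq> X y" "X x - X y \<noteq> 2" "X x - X y \<noteq> -2" "X x \<noteq> X z" "X x - X z \<noteq> 2" "X x - X z \<noteq> -2" "X y \<noteq> X x" "X y - X x \<noteq> 2" "X y - X x \<noteq> -2" "X y \<noteq> X z" "X y - X z \<noteq> 2" "X y - X z \<noteq> -2" "X z \<noteq> X x" "X z - X x \<noteq> 2" "X z - X x \<noteq> -2" "X z \<noteq> X y" "X z - X y \<noteq> 2" "X z - X y \<noteq> -2"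
    using g assms unfolding gen_def by auto
  have ne2: "X x + 2 \<noteq> X y" "X y \<noteq> X x + 2" "X x + 2 \<noteq> X z" "X z \<noteq> X x + 2" "X y + 2 \<noteq> X x" "X x \<noteq> X y + 2" "X y + 2 \<noteq> X z" "X z \<noteq> X y + 2" "X z + 2 \<noteq> X x" "X x \<noteq> X z + 2" "X z + 2 \<noteq> X y" "X y \<noteq> X z + 2"
    using ne by (simp_all add: shift_iff shift_iff2)
  have o: "x \<noteq> y" "y \<noteq> x" "x \<le> y" "\<not> y \<le> x" "x \<noteq> z" "z \<noteq> x" "x \<le> z" "\<not> z \<le> x" "y \<noteq> z" "z \<noteq> y" "y \<le> z" "\<not> z \<le> y" using assms by auto
  have c0: "LHSf X \<beta> \<beta>' [y,x,z] [y,x,z] = RHSf X \<beta> \<beta>' [y,x,z] [y,x,z]"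
    apply (simp only: LHSf_def RHSf_def E12_def E13_def E23_def dl_def Sh_def cw_def ww_def)
    apply (simp only: nth_Cons_0 nth_Cons_Suc numeral_2_eq_2 One_nat_def o list.inject if_True if_False simp_thms le_refl)
    apply simp
    apply (simp add: divide_simps ne ne2)?
    apply algebra?
    done
  have c1: "LHSf X \<beta> \<beta>' [y,x,z] [y,z,x] = RHSf X \<beta> \<beta>' [y,x,z] [y,z,x]"
    apply (simp only: LHSf_def RHSf_def E12_def E13_def E23_def dl_def Sh_def cw_def ww_def)
    apply (simp only: nth_Cons_0 nth_Cons_Suc numeral_2_eq_2 One_nat_def o list.inject if_True if_False simp_thms le_refl)
    apply simp
    apply (simp add: divide_simps ne ne2)?
    apply algebra?
    done
  have c2: "LHSf X \<beta> \<beta>' [y,x,z] [x,y,z] = RHSf X \<beta> \<beta>' [y,x,z] [x,y,z]"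
    apply (simp only: LHSf_def RHSf_def E12_def E13_def E23_def dl_def Sh_def cw_def ww_def)
    apply (simp only: nth_Cons_0 nth_Cons_Suc numeral_2_eq_2 One_nat_def o list.inject if_True if_False simp_thms le_refl)
    apply simp
    apply (simp add: divide_simps ne ne2)?
    apply algebra?
    done
  have c3: "LHSf X \<beta> \<beta>' [y,x,z] [x,z,y] = RHSf X \<beta> \<beta>' [y,x,z] [x,z,y]"
    apply (simp only: LHSf_def RHSf_def E12_def E13_def E23_def dl_def Sh_def cw_def ww_def)
    apply (simp only: nth_Cons_0 nth_Cons_Suc numeral_2_eq_2 One_nat_def o list.inject if_True if_False simp_thms le_refl)
    apply simp
    apply (simp add: divide_simps ne ne2)?
    apply algebra?
    done
  have c4: "LHSf X \<beta> \<beta>' [y,x,z] [z,y,x] = RHSf X \<beta> \<beta>' [y,x,z] [z,y,x]"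
    apply (simp only: LHSf_def RHSf_def E12_def E13_def E23_def dl_def Sh_def cw_def ww_def)
    apply (simp only: nth_Cons_0 nth_Cons_Suc numeral_2_eq_2 One_nat_def o list.inject if_True if_False simp_thms le_refl)
    apply simp
    apply (simp add: divide_simps ne ne2)?
    apply algebra?
    done
  have c5: "LHSf X \<beta> \<beta>' [y,x,z] [z,x,y] = RHSf X \<beta> \<beta>' [y,x,z] [z,x,y]"
    apply (simp only: LHSf_def RHSf_def E12_def E13_def E23_def dl_def Sh_def cw_def ww_def)
    apply (simp only: nth_Cons_0 nth_Cons_Suc numeral_2_eq_2 One_nat_def o list.inject if_True if_False simp_thms le_refl)
    apply simp
    apply (simp add: divide_simps ne ne2)?
    apply algebra?
    done
  show ?thesis
  proof (cases "J = [y,x,z] \<or> J = [y,z,x] \<or> J = [x,y,z] \<or> J = [x,z,y] \<or> J = [z,y,x] \<or> J = [z,x,y]")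
    case True
    then show ?thesis using c0 c1 c2 c3 c4 c5 by auto
  next
    case False
    then have "[y,x,z] \<noteq> J" "[y,z,x] \<noteq> J" "[x,y,z] \<noteq> J" "[x,z,y] \<noteq> J" "[z,y,x] \<noteq> J" "[z,x,y] \<noteq> J" by auto
    then show ?thesis using assms by (simp add: LHSf_def RHSf_def E12_def E13_def E23_def dl_def)
  qed
qed

lemma ord_110:
  fixes X :: "nat \<Rightarrow> complex"
  assumes "x < y" and g: "gen X {x,y}"
  shows "LHSf X \<beta> \<beta>' [y,y,x] J = RHSf X \<beta> \<beta>' [y,y,x] J"
proof -
  have ne: "X x \<noteq> X y" "X x - X y \<noteq> 2" "X x - X y \<noteq> -2" "X y \<noteq> X x" "X y - X x \<noteq> 2" "X y - X x \<noteq> -2"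
    using g assms unfolding gen_def by auto
  have ne2: "X x + 2 \<noteq> X y" "X y \<noteq> X x + 2" "X y + 2 \<noteq> X x" "X x \<noteq> X y + 2"
    using ne by (simp_all add: shift_iff shift_iff2)
  have o: "x \<noteq> y" "y \<noteq> x" "x \<le> y" "\<not> y \<le> x" using assms by auto
  have c0: "LHSf X \<beta> \<beta>' [y,y,x] [y,y,x] = RHSf X \<beta> \<beta>' [y,y,x] [y,y,x]"
    apply (simp only: LHSf_def RHSf_def E12_def E13_def E23_def dl_def Sh_def cw_def ww_def)
    apply (simp only: nth_Cons_0 nth_Cons_Suc numeral_2_eq_2 One_nat_def o list.inject if_True if_False simp_thms le_refl)
    apply simp
    apply (simp add: divide_simps ne ne2)?
    apply algebra?
    done
  have c1: "LHSf X \<beta> \<beta>' [y,y,x] [y,x,y] = RHSf X \<beta> \<beta>' [y,y,x] [y,x,y]"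
    apply (simp only: LHSf_def RHSf_def E12_def E13_def E23_def dl_def Sh_def cw_def ww_def)
    apply (simp only: nth_Cons_0 nth_Cons_Suc numeral_2_eq_2 One_nat_def o list.inject if_True if_False simp_thms le_refl)
    apply simp
    apply (simp add: divide_simps ne ne2)?
    apply algebra?
    done
  have c2: "LHSf X \<beta> \<beta>' [y,y,x] [x,y,y] = RHSf X \<beta> \<beta>' [y,y,x] [x,y,y]"
    apply (simp only: LHSf_def RHSf_def E12_def E13_def E23_def dl_def Sh_def cw_def ww_def)
    apply (simp only: nth_Cons_0 nth_Cons_Suc numeral_2_eq_2 One_nat_def o list.inject if_True if_False simp_thms le_refl)
    apply simp
    apply (simp add: divide_simps ne ne2)?
    apply algebra?
    done
  show ?thesis
  proof (cases "J = [y,y,x] \<or> J = [y,x,y] \<or> J = [x,y,y]")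
    case True
    then show ?thesis using c0 c1 c2 by auto
  next
    case False
    then have "[y,y,x] \<noteq> J" "[y,x,y] \<noteq> J" "[x,y,y] \<noteq> J" by auto
    then show ?thesis using assms by (simp add: LHSf_def RHSf_def E12_def E13_def E23_def dl_def)
  qed
qed

lemma ord_120:
  fixes X :: "nat \<Rightarrow> complex"
  assumes "x < y" "y < z" and g: "gen X {x,y,z}"
  shows "LHSf X \<beta> \<beta>' [y,z,x] J = RHSf X \<beta> \<beta>' [y,z,x] J"
proof -
  have ne: "X x \<noteq> X y" "X x - X y \<noteq> 2" "X x - X y \<noteq> -2" "X x \<noteq> X z" "X x - X z \<noteq> 2" "X x - X z \<noteq> -2" "X y \<noteq> X x" "X y - X x \<noteq> 2" "X y - X x \<noteq> -2" "X y \<noteq> X z" "X y - X z \<noteq> 2" "X y - X z \<noteq> -2" "X z \<noteq> X x" "X z - X x \<noteq> 2" "X z - X x \<noteq> -2" "X z \<noteq> X y" "X z - X y \<noteq> 2" "X z - X y \<noteq> -2"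
    using g assms unfolding gen_def by auto
  have ne2: "X x + 2 \<noteq> X y" "X y \<noteq> X x + 2" "X x + 2 \<noteq> X z" "X z \<noteq> X x + 2" "X y + 2 \<noteq> X x" "X x \<noteq> X y + 2" "X y + 2 \<noteq> X z" "X z \<noteq> X y + 2" "X z + 2 \<noteq> X x" "X x \<noteq> X z + 2" "X z + 2 \<noteq> X y" "X y \<noteq> X z + 2"
    using ne by (simp_all add: shift_iff shift_iff2)
  have o: "x \<noteq> y" "y \<noteq> x" "x \<le> y" "\<not> y \<le> x" "x \<noteq> z" "z \<noteq> x" "x \<le> z" "\<not> z \<le> x" "y \<noteq> z" "z \<noteq> y" "y \<le> z" "\<not> z \<le> y" using assms by auto
  have c0: "LHSf X \<beta> \<beta>' [y,z,x] [y,z,x] = RHSf X \<beta> \<beta>' [y,z,x] [y,z,x]"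
    apply (simp only: LHSf_def RHSf_def E12_def E13_def E23_def dl_def Sh_def cw_def ww_def)
    apply (simp only: nth_Cons_0 nth_Cons_Suc numeral_2_eq_2 One_nat_def o list.inject if_True if_False simp_thms le_refl)
    apply simp
    apply (simp add: divide_simps ne ne2)?
    apply algebra?
    done
  have c1: "LHSf X \<beta> \<beta>' [y,z,x] [y,x,z] = RHSf X \<beta> \<beta>' [y,z,x] [y,x,z]"
    apply (simp only: LHSf_def RHSf_def E12_def E13_def E23_def dl_def Sh_def cw_def ww_def)
    apply (simp only: nth_Cons_0 nth_Cons_Suc numeral_2_eq_2 One_nat_def o list.inject if_True if_False simp_thms le_refl)
    apply simp
    apply (simp add: divide_simps ne ne2)?
    apply algebra?
    done
  have c2: "LHSf X \<beta> \<beta>' [y,z,x] [z,y,x] = RHSf X \<beta> \<beta>' [y,z,x] [z,y,x]"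
    apply (simp only: LHSf_def RHSf_def E12_def E13_def E23_def dl_def Sh_def cw_def ww_def)
    apply (simp only: nth_Cons_0 nth_Cons_Suc numeral_2_eq_2 One_nat_def o list.inject if_True if_False simp_thms le_refl)
    apply simp
    apply (simp add: divide_simps ne ne2)?
    apply algebra?
    done
  have c3: "LHSf X \<beta> \<beta>' [y,z,x] [z,x,y] = RHSf X \<beta> \<beta>' [y,z,x] [z,x,y]"
    apply (simp only: LHSf_def RHSf_def E12_def E13_def E23_def dl_def Sh_def cw_def ww_def)
    apply (simp only: nth_Cons_0 nth_Cons_Suc numeral_2_eq_2 One_nat_def o list.inject if_True if_False simp_thms le_refl)
    apply simp
    apply (simp add: divide_simps ne ne2)?
    apply algebra?
    done
  have c4: "LHSf X \<beta> \<beta>' [y,z,x] [x,y,z] = RHSf X \<beta> \<beta>' [y,z,x] [x,y,z]"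
    apply (simp only: LHSf_def RHSf_def E12_def E13_def E23_def dl_def Sh_def cw_def ww_def)
    apply (simp only: nth_Cons_0 nth_Cons_Suc numeral_2_eq_2 One_nat_def o list.inject if_True if_False simp_thms le_refl)
    apply simp
    apply (simp add: divide_simps ne ne2)?
    apply algebra?
    done
  have c5: "LHSf X \<beta> \<beta>' [y,z,x] [x,z,y] = RHSf X \<beta> \<beta>' [y,z,x] [x,z,y]"
    apply (simp only: LHSf_def RHSf_def E12_def E13_def E23_def dl_def Sh_def cw_def ww_def)
    apply (simp only: nth_Cons_0 nth_Cons_Suc numeral_2_eq_2 One_nat_def o list.inject if_True if_False simp_thms le_refl)
    apply simp
    apply (simp add: divide_simps ne ne2)?
    apply algebra?
    done
  show ?thesis
  proof (cases "J = [y,z,x] \<or> J = [y,x,z] \<or> J = [z,y,x] \<or> J = [z,x,y] \<or> J = [x,y,z] \<or> J = [x,z,y]")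
    case True
    then show ?thesis using c0 c1 c2 c3 c4 c5 by auto
  next
    case False
    then have "[y,z,x] \<noteq> J" "[y,x,z] \<noteq> J" "[z,y,x] \<noteq> J" "[z,x,y] \<noteq> J" "[x,y,z] \<noteq> J" "[x,z,y] \<noteq> J" by auto
    then show ?thesis using assms by (simp add: LHSf_def RHSf_def E12_def E13_def E23_def dl_def)
  qed
qed

lemma ord_201:
  fixes X :: "nat \<Rightarrow> complex"
  assumes "x < y" "y < z" and g: "gen X {x,y,z}"
  shows "LHSf X \<beta> \<beta>' [z,x,y] J = RHSf X \<beta> \<beta>' [z,x,y] J"
proof -
  have ne: "X x \<noteq> X y" "X x - X y \<noteq> 2" "X x - X y \<noteq> -2" "X x \<noteq> X z" "X x - X z \<noteq> 2" "X x - X z \<noteq> -2" "X y \<noteq> X x" "X y - X x \<noteq> 2" "X y - X x \<noteq> -2" "X y \<noteq> X z" "X y - X z \<noteq> 2" "X y - X z \<noteq> -2" "X z \<noteq> X x" "X z - X x \<noteq> 2" "X z - X x \<noteq> -2" "X z \<noteq> X y" "X z - X y \<noteq> 2" "X z - X y \<noteq> -2"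
    using g assms unfolding gen_def by auto
  have ne2: "X x + 2 \<noteq> X y" "X y \<noteq> X x + 2" "X x + 2 \<noteq> X z" "X z \<noteq> X x + 2" "X y + 2 \<noteq> X x" "X x \<noteq> X y + 2" "X y + 2 \<noteq> X z" "X z \<noteq> X y + 2" "X z + 2 \<noteq> X x" "X x \<noteq> X z + 2" "X z + 2 \<noteq> X y" "X y \<noteq> X z + 2"
    using ne by (simp_all add: shift_iff shift_iff2)
  have o: "x \<noteq> y" "y \<noteq> x" "x \<le> y" "\<not> y \<le> x" "x \<noteq> z" "z \<noteq> x" "x \<le> z" "\<not> z \<le> x" "y \<noteq> z" "z \<noteq> y" "y \<le> z" "\<not> z \<le> y" using assms by auto
  have c0: "LHSf X \<beta> \<beta>' [z,x,y] [z,x,y] = RHSf X \<beta> \<beta>' [z,x,y] [z,x,y]"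
    apply (simp only: LHSf_def RHSf_def E12_def E13_def E23_def dl_def Sh_def cw_def ww_def)
    apply (simp only: nth_Cons_0 nth_Cons_Suc numeral_2_eq_2 One_nat_def o list.inject if_True if_False simp_thms le_refl)
    apply simp
    apply (simp add: divide_simps ne ne2)?
    apply algebra?
    done
  have c1: "LHSf X \<beta> \<beta>' [z,x,y] [z,y,x] = RHSf X \<beta> \<beta>' [z,x,y] [z,y,x]"
    apply (simp only: LHSf_def RHSf_def E12_def E13_def E23_def dl_def Sh_def cw_def ww_def)
    apply (simp only: nth_Cons_0 nth_Cons_Suc numeral_2_eq_2 One_nat_def o list.inject if_True if_False simp_thms le_refl)
    apply simp
    apply (simp add: divide_simps ne ne2)?
    apply algebra?
    done
  have c2: "LHSf X \<beta> \<beta>' [z,x,y] [x,z,y] = RHSf X \<beta> \<beta>' [z,x,y] [x,z,y]"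
    apply (simp only: LHSf_def RHSf_def E12_def E13_def E23_def dl_def Sh_def cw_def ww_def)
    apply (simp only: nth_Cons_0 nth_Cons_Suc numeral_2_eq_2 One_nat_def o list.inject if_True if_False simp_thms le_refl)
    apply simp
    apply (simp add: divide_simps ne ne2)?
    apply algebra?
    done
  have c3: "LHSf X \<beta> \<beta>' [z,x,y] [x,y,z] = RHSf X \<beta> \<beta>' [z,x,y] [x,y,z]"
    apply (simp only: LHSf_def RHSf_def E12_def E13_def E23_def dl_def Sh_def cw_def ww_def)
    apply (simp only: nth_Cons_0 nth_Cons_Suc numeral_2_eq_2 One_nat_def o list.inject if_True if_False simp_thms le_refl)
    apply simp
    apply (simp add: divide_simps ne ne2)?
    apply algebra?
    done
  have c4: "LHSf X \<beta> \<beta>' [z,x,y] [y,z,x] = RHSf X \<beta> \<beta>' [z,x,y] [y,z,x]"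
    apply (simp only: LHSf_def RHSf_def E12_def E13_def E23_def dl_def Sh_def cw_def ww_def)
    apply (simp only: nth_Cons_0 nth_Cons_Suc numeral_2_eq_2 One_nat_def o list.inject if_True if_False simp_thms le_refl)
    apply simp
    apply (simp add: divide_simps ne ne2)?
    apply algebra?
    done
  have c5: "LHSf X \<beta> \<beta>' [z,x,y] [y,x,z] = RHSf X \<beta> \<beta>' [z,x,y] [y,x,z]"
    apply (simp only: LHSf_def RHSf_def E12_def E13_def E23_def dl_def Sh_def cw_def ww_def)
    apply (simp only: nth_Cons_0 nth_Cons_Suc numeral_2_eq_2 One_nat_def o list.inject if_True if_False simp_thms le_refl)
    apply simp
    apply (simp add: divide_simps ne ne2)?
    apply algebra?
    done
  show ?thesis
  proof (cases "J = [z,x,y] \<or> J = [z,y,x] \<or> J = [x,z,y] \<or> J = [x,y,z] \<or> J = [y,z,x] \<or> J = [y,x,z]")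
    case True
    then show ?thesis using c0 c1 c2 c3 c4 c5 by auto
  next
    case False
    then have "[z,x,y] \<noteq> J" "[z,y,x] \<noteq> J" "[x,z,y] \<noteq> J" "[x,y,z] \<noteq> J" "[y,z,x] \<noteq> J" "[y,x,z] \<noteq> J" by auto
    then show ?thesis using assms by (simp add: LHSf_def RHSf_def E12_def E13_def E23_def dl_def)
  qed
qed

lemma ord_210:
  fixes X :: "nat \<Rightarrow> complex"
  assumes "x < y" "y < z" and g: "gen X {x,y,z}"
  shows "LHSf X \<beta> \<beta>' [z,y,x] J = RHSf X \<beta> \<beta>' [z,y,x] J"
proof -
  have ne: "X x \<noteq> X y" "X x - X y \<noteq> 2" "X x - X y \<noteq> -2" "X x \<noteq> X z" "X x - X z \<noteq> 2" "X x - X z \<noteq> -2" "X y \<noteq> X x" "X y - X x \<noteq> 2" "X y - X x \<noteq> -2" "X y \<noteq> X z" "X y - X z \<noteq> 2" "X y - X z \<noteq> -2" "X z \<noteq> X x" "X z - X x \<noteq> 2" "X z - X x \<noteq> -2" "X z \<noteq> X y" "X z - X y \<noteq> 2" "X z - X y \<noteq> -2"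
    using g assms unfolding gen_def by auto
  have ne2: "X x + 2 \<noteq> X y" "X y \<noteq> X x + 2" "X x + 2 \<noteq> X z" "X z \<noteq> X x + 2" "X y + 2 \<noteq> X x" "X x \<noteq> X y + 2" "X y + 2 \<noteq> X z" "X z \<noteq> X y + 2" "X z + 2 \<noteq> X x" "X x \<noteq> X z + 2" "X z + 2 \<noteq> X y" "X y \<noteq> X z + 2"
    using ne by (simp_all add: shift_iff shift_iff2)
  have o: "x \<noteq> y" "y \<noteq> x" "x \<le> y" "\<not> y \<le> x" "x \<noteq> z" "z \<noteq> x" "x \<le> z" "\<not> z \<le> x" "y \<noteq> z" "z \<noteq> y" "y \<le> z" "\<not> z \<le> y" using assms by auto
  have c0: "LHSf X \<beta> \<beta>' [z,y,x] [z,y,x] = RHSf X \<beta> \<beta>' [z,y,x] [z,y,x]"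
    apply (simp only: LHSf_def RHSf_def E12_def E13_def E23_def dl_def Sh_def cw_def ww_def)
    apply (simp only: nth_Cons_0 nth_Cons_Suc numeral_2_eq_2 One_nat_def o list.inject if_True if_False simp_thms le_refl)
    apply simp
    apply (simp add: divide_simps ne ne2)?
    apply algebra?
    done
  have c1: "LHSf X \<beta> \<beta>' [z,y,x] [z,x,y] = RHSf X \<beta> \<beta>' [z,y,x] [z,x,y]"
    apply (simp only: LHSf_def RHSf_def E12_def E13_def E23_def dl_def Sh_def cw_def ww_def)
    apply (simp only: nth_Cons_0 nth_Cons_Suc numeral_2_eq_2 One_nat_def o list.inject if_True if_False simp_thms le_refl)
    apply simp
    apply (simp add: divide_simps ne ne2)?
    apply algebra?
    done
  have c2: "LHSf X \<beta> \<beta>' [z,y,x] [y,z,x] = RHSf X \<beta> \<beta>' [z,y,x] [y,z,x]"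
    apply (simp only: LHSf_def RHSf_def E12_def E13_def E23_def dl_def Sh_def cw_def ww_def)
    apply (simp only: nth_Cons_0 nth_Cons_Suc numeral_2_eq_2 One_nat_def o list.inject if_True if_False simp_thms le_refl)
    apply simp
    apply (simp add: divide_simps ne ne2)?
    apply algebra?
    done
  have c3: "LHSf X \<beta> \<beta>' [z,y,x] [y,x,z] = RHSf X \<beta> \<beta>' [z,y,x] [y,x,z]"
    apply (simp only: LHSf_def RHSf_def E12_def E13_def E23_def dl_def Sh_def cw_def ww_def)
    apply (simp only: nth_Cons_0 nth_Cons_Suc numeral_2_eq_2 One_nat_def o list.inject if_True if_False simp_thms le_refl)
    apply simp
    apply (simp add: divide_simps ne ne2)?
    apply algebra?
    done
  have c4: "LHSf X \<beta> \<beta>' [z,y,x] [x,z,y] = RHSf X \<beta> \<beta>' [z,y,x] [x,z,y]"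
    apply (simp only: LHSf_def RHSf_def E12_def E13_def E23_def dl_def Sh_def cw_def ww_def)
    apply (simp only: nth_Cons_0 nth_Cons_Suc numeral_2_eq_2 One_nat_def o list.inject if_True if_False simp_thms le_refl)
    apply simp
    apply (simp add: divide_simps ne ne2)?
    apply algebra?
    done
  have c5: "LHSf X \<beta> \<beta>' [z,y,x] [x,y,z] = RHSf X \<beta> \<beta>' [z,y,x] [x,y,z]"
    apply (simp only: LHSf_def RHSf_def E12_def E13_def E23_def dl_def Sh_def cw_def ww_def)
    apply (simp only: nth_Cons_0 nth_Cons_Suc numeral_2_eq_2 One_nat_def o list.inject if_True if_False simp_thms le_refl)
    apply simp
    apply (simp add: divide_simps ne ne2)?
    apply algebra?
    done
  show ?thesis
  proof (cases "J = [z,y,x] \<or> J = [z,x,y] \<or> J = [y,z,x] \<or> J = [y,x,z] \<or> J = [x,z,y] \<or> J = [x,y,z]")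
    case True
    then show ?thesis using c0 c1 c2 c3 c4 c5 by auto
  next
    case False
    then have "[z,y,x] \<noteq> J" "[z,x,y] \<noteq> J" "[y,z,x] \<noteq> J" "[y,x,z] \<noteq> J" "[x,z,y] \<noteq> J" "[x,y,z] \<noteq> J" by auto
    then show ?thesis using assms by (simp add: LHSf_def RHSf_def E12_def E13_def E23_def dl_def)
  qed
qed


lemma ybe_core:
  fixes X :: "nat \<Rightarrow> complex"
  assumes g: "gen X {a,b,c}"
  shows "LHSf X \<beta> \<beta>' [a,b,c] J = RHSf X \<beta> \<beta>' [a,b,c] J"
proof -
  have "LHSf X \<beta> \<beta>' [a,b,c] J = RHSf X \<beta> \<beta>' [a,b,c] J" if "a = b" "a = c"
    using ord_000[where X=X and x=a] g that by (simp add: insert_commute)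
  note h000 = this
  have "LHSf X \<beta> \<beta>' [a,b,c] J = RHSf X \<beta> \<beta>' [a,b,c] J" if "a = b" "a < c"
    using ord_001[where X=X and x=a and y=c] g that by (simp add: insert_commute)
  note h001 = this
  have "LHSf X \<beta> \<beta>' [a,b,c] J = RHSf X \<beta> \<beta>' [a,b,c] J" if "a = c" "a < b"
    using ord_010[where X=X and x=a and y=b] g that by (simp add: insert_commute)
  note h010 = this
  have "LHSf X \<beta> \<beta>' [a,b,c] J = RHSf X \<beta> \<beta>' [a,b,c] J" if "b = c" "a < b"
    using ord_011[where X=X and x=a and y=b] g that by (simp add: insert_commute)
  note h011 = this
  have "LHSf X \<beta> \<beta>' [a,b,c] J = RHSf X \<beta> \<beta>' [a,b,c] J" if "a < b" "b < c"
    using ord_012[where X=X and x=a and y=b and z=c] g that by (simp add: insert_commute)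
  note h012 = this
  have "LHSf X \<beta> \<beta>' [a,b,c] J = RHSf X \<beta> \<beta>' [a,b,c] J" if "a < c" "c < b"
    using ord_021[where X=X and x=a and y=c and z=b] g that by (simp add: insert_commute)
  note h021 = this
  have "LHSf X \<beta> \<beta>' [a,b,c] J = RHSf X \<beta> \<beta>' [a,b,c] J" if "b = c" "b < a"
    using ord_100[where X=X and x=b and y=a] g that by (simp add: insert_commute)
  note h100 = this
  have "LHSf X \<beta> \<beta>' [a,b,c] J = RHSf X \<beta> \<beta>' [a,b,c] J" if "a = c" "b < a"
    using ord_101[where X=X and x=b and y=a] g that by (simp add: insert_commute)
  note h101 = this
  have "LHSf X \<beta> \<beta>' [a,b,c] J = RHSf X \<beta> \<beta>' [a,b,c] J" if "b < a" "a < c"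
    using ord_102[where X=X and x=b and y=a and z=c] g that by (simp add: insert_commute)
  note h102 = this
  have "LHSf X \<beta> \<beta>' [a,b,c] J = RHSf X \<beta> \<beta>' [a,b,c] J" if "a = b" "c < a"
    using ord_110[where X=X and x=c and y=a] g that by (simp add: insert_commute)
  note h110 = this
  have "LHSf X \<beta> \<beta>' [a,b,c] J = RHSf X \<beta> \<beta>' [a,b,c] J" if "c < a" "a < b"
    using ord_120[where X=X and x=c and y=a and z=b] g that by (simp add: insert_commute)
  note h120 = this
  have "LHSf X \<beta> \<beta>' [a,b,c] J = RHSf X \<beta> \<beta>' [a,b,c] J" if "b < c" "c < a"
    using ord_201[where X=X and x=b and y=c and z=a] g that by (simp add: insert_commute)
  note h201 = this
  have "LHSf X \<beta> \<beta>' [a,b,c] J = RHSf X \<beta> \<beta>' [a,b,c] J" if "c < b" "b < a"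
    using ord_210[where X=X and x=c and y=b and z=a] g that by (simp add: insert_commute)
  note h210 = this
  show ?thesis
    using h000 h001 h010 h011 h012 h021 h100 h101 h102 h110 h120 h201 h210 less_linear[of a b] less_linear[of b c] less_linear[of a c]
    by (metis less_trans)
qed

lemma cw_ww_shift:
  assumes "\<And>p. p \<in> {1..N} \<Longrightarrow> Y p = Z p + k" "p \<in> {1..N}" "q \<in> {1..N}"
  shows "cw Y p q = cw Z p q" "ww Y u p q = ww Z u p q"
proof -
  have "Y p - Y q = Z p - Z q" using assms by simp
  then show "cw Y p q = cw Z p q" "ww Y u p q = ww Z u p q" unfolding cw_def ww_def by simp_all
qed

definition Rform :: "nat \<Rightarrow> (nat \<Rightarrow> op) \<Rightarrow> complex \<Rightarrow> complex \<Rightarrow> (nat \<Rightarrow> nat \<Rightarrow> complex) \<Rightarrow> bool" where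
  "Rform N G r u Y = (\<forall>c\<in>{1..N}. \<forall>p\<in>{1..N}. \<forall>q\<in>{1..N}. \<forall>J\<in>idx N 2.
      G c [p,q] J = r * ((if J = [p,q] then u * cw (Y c) p q else 0) + (if J = [q,p] then ww (Y c) u p q else 0)))"

lemma Rform_plain: "Rform N (\<lambda>c. Rdyn N u s) (rr N u) u (\<lambda>c. xcoord N s)"
  unfolding Rform_def by (intro ballI Rdyn_entry)

lemma Rform_shift:
  assumes "N > 0"
  shows "Rform N (\<lambda>c. Rdyn N u (sshift N s c)) (rr N u) u (\<lambda>c. Sh (xcoord N s) c)"
  unfolding Rform_def
proof (intro ballI)
  fix c p q J assume c: "c \<in> {1..N}" and p: "p \<in> {1..N}" and q: "q \<in> {1..N}" and J: "J \<in> idx N 2"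
  have sh: "xcoord N (sshift N s c) x = Sh (xcoord N s) c x + (- 2 / of_nat N)" if "x \<in> {1..N}" for x
    using xcoord_shift[OF assms that c] by (simp add: Sh_def)
  show "Rdyn N u (sshift N s c) [p, q] J = rr N u * ((if J = [p, q] then u * cw (Sh (xcoord N s) c) p q else 0) +
          (if J = [q, p] then ww (Sh (xcoord N s) c) u p q else 0))"
    by (simp only: Rdyn_entry[OF p q J, of u "sshift N s c"] cw_ww_shift[OF sh p q])
qed

lemma RformD:
  assumes "Rform N G r u Y" "c \<in> {1..N}" "p \<in> {1..N}" "q \<in> {1..N}" "J \<in> idx N 2"
  shows "G c [p,q] J = r * ((if J = [p,q] then u * cw (Y c) p q else 0) + (if J = [q,p] then ww (Y c) u p q else 0))"
  using assms unfolding Rform_def by blast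

lemma lift12_row:
  assumes "Rform N G r u Y" "a \<in> {1..N}" "b \<in> {1..N}" "c \<in> {1..N}" "K \<in> idx N 3"
  shows "lift12 G [a,b,c] K = (if K = [a,b,c] then r * u * cw (Y c) a b else 0) + (if K = [b,a,c] then r * ww (Y c) u a b else 0)"
proof -
  obtain k0 k1 k2 where K: "K = [k0,k1,k2]" "k0 \<in> {1..N}" "k1 \<in> {1..N}" using assms(5) by (auto simp: idx3_iff)
  have e: "G c [a,b] [k0,k1] = r * ((if [k0,k1] = [a,b] then u * cw (Y c) a b else 0) + (if [k0,k1] = [b,a] then ww (Y c) u a b else 0))"
    by (rule RformD) (use assms(1-4) K(2,3) in \<open>auto intro: idx2I\<close>)
  have L: "lift12 G [a,b,c] [k0,k1,k2] = (if c = k2 then G c [a,b] [k0,k1] else 0)" by (simp add: lift12_def)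
  show ?thesis unfolding K(1) L e
    by (cases "c = k2"; cases "k0 = a"; cases "k1 = b"; cases "k0 = b"; cases "k1 = a") (simp_all add: distrib_left mult.assoc)
qed

lemma lift13_row:
  assumes "Rform N G r u Y" "a \<in> {1..N}" "b \<in> {1..N}" "c \<in> {1..N}" "K \<in> idx N 3"
  shows "lift13 G [a,b,c] K = (if K = [a,b,c] then r * u * cw (Y b) a c else 0) + (if K = [c,b,a] then r * ww (Y b) u a c else 0)"
proof -
  obtain k0 k1 k2 where K: "K = [k0,k1,k2]" "k0 \<in> {1..N}" "k2 \<in> {1..N}" using assms(5) by (auto simp: idx3_iff)
  have e: "G b [a,c] [k0,k2] = r * ((if [k0,k2] = [a,c] then u * cw (Y b) a c else 0) + (if [k0,k2] = [c,a] then ww (Y b) u a c else 0))"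
    by (rule RformD) (use assms(1-4) K(2,3) in \<open>auto intro: idx2I\<close>)
  have L: "lift13 G [a,b,c] [k0,k1,k2] = (if b = k1 then G b [a,c] [k0,k2] else 0)" by (simp add: lift13_def)
  show ?thesis unfolding K(1) L e
    by (cases "b = k1"; cases "k0 = a"; cases "k2 = c"; cases "k0 = c"; cases "k2 = a") (simp_all add: distrib_left mult.assoc)
qed

lemma lift23_row:
  assumes "Rform N G r u Y" "a \<in> {1..N}" "b \<in> {1..N}" "c \<in> {1..N}" "K \<in> idx N 3"
  shows "lift23 G [a,b,c] K = (if K = [a,b,c] then r * u * cw (Y a) b c else 0) + (if K = [a,c,b] then r * ww (Y a) u b c else 0)"
proof -
  obtain k0 k1 k2 where K: "K = [k0,k1,k2]" "k1 \<in> {1..N}" "k2 \<in> {1..N}" using assms(5) by (auto simp: idx3_iff)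
  have e: "G a [b,c] [k1,k2] = r * ((if [k1,k2] = [b,c] then u * cw (Y a) b c else 0) + (if [k1,k2] = [c,b] then ww (Y a) u b c else 0))"
    by (rule RformD) (use assms(1-4) K(2,3) in \<open>auto intro: idx2I\<close>)
  have L: "lift23 G [a,b,c] [k0,k1,k2] = (if a = k0 then G a [b,c] [k1,k2] else 0)" by (simp add: lift23_def)
  show ?thesis unfolding K(1) L e
    by (cases "a = k0"; cases "k1 = b"; cases "k2 = c"; cases "k1 = c"; cases "k2 = b") (simp_all add: distrib_left mult.assoc)
qed

lemma lift12_mmul:
  assumes "Rform N G r u Y" "K \<in> idx N 3"
  shows "mmul N 3 (lift12 G) B K J = r * E12 (Y (K!2)) u K (\<lambda>L. B L J)"
proof -
  obtain a b c where K: "K = [a,b,c]" "a \<in> {1..N}" "b \<in> {1..N}" "c \<in> {1..N}" using assms(2) by (auto simp: idx3_iff)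
  have "mmul N 3 (lift12 G) B [a,b,c] J = (r * u * cw (Y c) a b) * B [a,b,c] J + (r * ww (Y c) u a b) * B [b,a,c] J"
    by (rule mmul_row2) (use K in \<open>simp_all add: idx3I lift12_row[OF assms(1)]\<close>)
  then show ?thesis unfolding K(1) E12_def by (simp add: algebra_simps)
qed

lemma lift13_mmul:
  assumes "Rform N G r u Y" "K \<in> idx N 3"
  shows "mmul N 3 (lift13 G) B K J = r * E13 (Y (K!1)) u K (\<lambda>L. B L J)"
proof -
  obtain a b c where K: "K = [a,b,c]" "a \<in> {1..N}" "b \<in> {1..N}" "c \<in> {1..N}" using assms(2) by (auto simp: idx3_iff)
  have "mmul N 3 (lift13 G) B [a,b,c] J = (r * u * cw (Y b) a c) * B [a,b,c] J + (r * ww (Y b) u a c) * B [c,b,a] J"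
    by (rule mmul_row2) (use K in \<open>simp_all add: idx3I lift13_row[OF assms(1)]\<close>)
  then show ?thesis unfolding K(1) E13_def by (simp add: algebra_simps)
qed

lemma lift23_mmul:
  assumes "Rform N G r u Y" "K \<in> idx N 3"
  shows "mmul N 3 (lift23 G) B K J = r * E23 (Y (K!0)) u K (\<lambda>L. B L J)"
proof -
  obtain a b c where K: "K = [a,b,c]" "a \<in> {1..N}" "b \<in> {1..N}" "c \<in> {1..N}" using assms(2) by (auto simp: idx3_iff)
  have "mmul N 3 (lift23 G) B [a,b,c] J = (r * u * cw (Y a) b c) * B [a,b,c] J + (r * ww (Y a) u b c) * B [a,c,b] J"
    by (rule mmul_row2) (use K in \<open>simp_all add: idx3I lift23_row[OF assms(1)]\<close>)
  then show ?thesis unfolding K(1) E23_def by (simp add: algebra_simps)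
qed

lemma lift12_entry:
  assumes "Rform N G r u Y" "K \<in> idx N 3" "J \<in> idx N 3"
  shows "lift12 G K J = r * E12 (Y (K!2)) u K (dl J)"
proof -
  obtain a b c where K: "K = [a,b,c]" "a \<in> {1..N}" "b \<in> {1..N}" "c \<in> {1..N}" using assms(2) by (auto simp: idx3_iff)
  show ?thesis unfolding K(1) lift12_row[OF assms(1) K(2-4) assms(3)] E12_def dl_def
    by (simp add: algebra_simps eq_commute[of J])
qed

lemma lift23_entry:
  assumes "Rform N G r u Y" "K \<in> idx N 3" "J \<in> idx N 3"
  shows "lift23 G K J = r * E23 (Y (K!0)) u K (dl J)"
proof -
  obtain a b c where K: "K = [a,b,c]" "a \<in> {1..N}" "b \<in> {1..N}" "c \<in> {1..N}" using assms(2) by (auto simp: idx3_iff)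
  show ?thesis unfolding K(1) lift23_row[OF assms(1) K(2-4) assms(3)] E23_def dl_def
    by (simp add: algebra_simps eq_commute[of J])
qed

lemma E12_cong: "K \<in> idx N 3 \<Longrightarrow> (\<And>L. L \<in> idx N 3 \<Longrightarrow> f L = g L) \<Longrightarrow> E12 X u K f = E12 X u K g"
  by (auto simp: idx3_iff E12_def idx3I)
lemma E13_cong: "K \<in> idx N 3 \<Longrightarrow> (\<And>L. L \<in> idx N 3 \<Longrightarrow> f L = g L) \<Longrightarrow> E13 X u K f = E13 X u K g"
  by (auto simp: idx3_iff E13_def idx3I)
lemma E23_cong: "K \<in> idx N 3 \<Longrightarrow> (\<And>L. L \<in> idx N 3 \<Longrightarrow> f L = g L) \<Longrightarrow> E23 X u K f = E23 X u K g"
  by (auto simp: idx3_iff E23_def idx3I)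

lemma E12_scale: "E12 X u K (\<lambda>L. r * f L) = r * E12 X u K f" by (simp add: E12_def algebra_simps)
lemma E13_scale: "E13 X u K (\<lambda>L. r * f L) = r * E13 X u K f" by (simp add: E13_def algebra_simps)
lemma E23_scale: "E23 X u K (\<lambda>L. r * f L) = r * E23 X u K f" by (simp add: E23_def algebra_simps)

theorem mainTheorem2:
  fixes N :: nat and s :: "nat \<Rightarrow> complex" and u \<beta> \<beta>' :: complex
  assumes "N \<ge> 2"
    and generic: "\<forall>a\<in>{1..N}. \<forall>b\<in>{1..N}. a \<noteq> b \<longrightarrow>
                   xcoord N s a - xcoord N s b \<notin> {0, 2, -2}"
  shows "(\<forall>a\<in>{1..N}. Rdyn N u s [a, a] [a, a] = rho N u)
    \<and> (\<forall>a\<in>{1..N}. \<forall>b\<in>{1..N}. b > a \<longrightarrow>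
         Rdyn N u s [a, b] [a, b] = rho N u * (u / (u + 1)))
    \<and> (\<forall>a\<in>{1..N}. \<forall>b\<in>{1..N}. b < a \<longrightarrow>
         Rdyn N u s [a, b] [a, b] =
           rho N u * ((1 - 4 / (xcoord N s a - xcoord N s b)^2) * (u / (u + 1))))
    \<and> (\<forall>a\<in>{1..N}. \<forall>b\<in>{1..N}. a \<noteq> b \<longrightarrow>
         Rdyn N u s [a, b] [b, a] =
           rho N u * ((1 + 2 * u / (xcoord N s a - xcoord N s b)) * (1 / (u + 1))))
    \<and> (\<forall>I\<in>idx N 2. \<forall>J\<in>idx N 2. I \<noteq> J \<and> I \<noteq> rev J \<longrightarrow> Rdyn N u s I J = 0)
    \<and> (\<forall>I\<in>idx N 3. \<forall>J\<in>idx N 3.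
         mmul N 3 (mmul N 3 (lift12 (\<lambda>c. Rdyn N \<beta> (sshift N s c)))
                            (lift13 (\<lambda>c. Rdyn N (\<beta> + \<beta>') s)))
                  (lift23 (\<lambda>c. Rdyn N \<beta>' (sshift N s c))) I J
       = mmul N 3 (mmul N 3 (lift23 (\<lambda>c. Rdyn N \<beta>' s))
                            (lift13 (\<lambda>c. Rdyn N (\<beta> + \<beta>') (sshift N s c))))
                  (lift12 (\<lambda>c. Rdyn N \<beta> s)) I J)"
proof -
  let ?X = "xcoord N s"
  have N0: "N > 0" using assms(1) by simp
  have rho_m1: "rho N (-1) = 0"
    by (simp add: rho_def Gamma1_def)
  have aa: "Rdyn N u s [a, a] [a, a] = rho N u" if a: "a \<in> {1..N}" for a
  proof -
    have "Rdyn N u s [a, a] [a, a] = rr N u * (u + 1)"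
      using Rdyn_entry[OF a a idx2I[OF a a], of u s] by (simp add: cw_def ww_def)
    also have "\<dots> = rho N u"
      by (cases "u = -1") (simp_all add: rr_def rho_m1 add_eq_0_iff2)
    finally show ?thesis .
  qed
  have ab1: "Rdyn N u s [a, b] [a, b] = rho N u * (u / (u + 1))" if a: "a \<in> {1..N}" and b: "b \<in> {1..N}" and "b > a" for a b
    using Rdyn_entry[OF a b idx2I[OF a b], of u s] that by (simp add: cw_def rr_def)
  have ab2: "Rdyn N u s [a, b] [a, b] = rho N u * ((1 - 4 / (xcoord N s a - xcoord N s b)^2) * (u / (u + 1)))"
    if a: "a \<in> {1..N}" and b: "b \<in> {1..N}" and "b < a" for a b
    using Rdyn_entry[OF a b idx2I[OF a b], of u s] that by (simp add: cw_def rr_def)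
  have ab3: "Rdyn N u s [a, b] [b, a] = rho N u * ((1 + 2 * u / (xcoord N s a - xcoord N s b)) * (1 / (u + 1)))"
    if a: "a \<in> {1..N}" and b: "b \<in> {1..N}" and "a \<noteq> b" for a b
    using Rdyn_entry[OF a b idx2I[OF b a], of u s] that by (simp add: ww_def rr_def)
  have zero: "Rdyn N u s I J = 0" if I: "I \<in> idx N 2" and J: "J \<in> idx N 2" and ne: "I \<noteq> J \<and> I \<noteq> rev J" for I J
  proof -
    obtain p q where pq: "I = [p,q]" "p \<in> {1..N}" "q \<in> {1..N}" using I by (auto simp: idx2_iff)
    have "J \<noteq> [p,q]" "J \<noteq> [q,p]" using ne pq(1) by auto
    then show ?thesis using Rdyn_entry[OF pq(2,3) J, of u s] pq(1) by simp
  qed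
  have ybe: "mmul N 3 (mmul N 3 (lift12 (\<lambda>c. Rdyn N \<beta> (sshift N s c)))
                            (lift13 (\<lambda>c. Rdyn N (\<beta> + \<beta>') s)))
                  (lift23 (\<lambda>c. Rdyn N \<beta>' (sshift N s c))) I J
       = mmul N 3 (mmul N 3 (lift23 (\<lambda>c. Rdyn N \<beta>' s))
                            (lift13 (\<lambda>c. Rdyn N (\<beta> + \<beta>') (sshift N s c))))
                  (lift12 (\<lambda>c. Rdyn N \<beta> s)) I J"
    if I: "I \<in> idx N 3" and J: "J \<in> idx N 3" for I J
  proof -
    obtain a b c where abc: "I = [a,b,c]" "a \<in> {1..N}" "b \<in> {1..N}" "c \<in> {1..N}" using I by (auto simp: idx3_iff)
    note Fs1 = Rform_shift[OF N0, of \<beta> s]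
    note Fs2 = Rform_shift[OF N0, of "\<beta> + \<beta>'" s]
    note Fs3 = Rform_shift[OF N0, of \<beta>' s]
    note Fp1 = Rform_plain[of N \<beta> s]
    note Fp2 = Rform_plain[of N "\<beta> + \<beta>'" s]
    note Fp3 = Rform_plain[of N \<beta>' s]
    have g: "gen ?X {a,b,c}"
      using generic abc(2-4) unfolding gen_def by blast
    have L: "mmul N 3 (mmul N 3 (lift12 (\<lambda>c. Rdyn N \<beta> (sshift N s c)))
                            (lift13 (\<lambda>c. Rdyn N (\<beta> + \<beta>') s)))
                  (lift23 (\<lambda>c. Rdyn N \<beta>' (sshift N s c))) I J
        = rr N \<beta> * rr N (\<beta> + \<beta>') * rr N \<beta>' * LHSf ?X \<beta> \<beta>' I J"
    proof -
      have inner: "mmul N 3 (lift13 (\<lambda>c. Rdyn N (\<beta> + \<beta>') s)) (lift23 (\<lambda>c. Rdyn N \<beta>' (sshift N s c))) K J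
          = rr N (\<beta> + \<beta>') * rr N \<beta>' * E13 ?X (\<beta> + \<beta>') K (\<lambda>L. E23 (Sh ?X (L!0)) \<beta>' L (dl J))"
        if K: "K \<in> idx N 3" for K
      proof -
        have "mmul N 3 (lift13 (\<lambda>c. Rdyn N (\<beta> + \<beta>') s)) (lift23 (\<lambda>c. Rdyn N \<beta>' (sshift N s c))) K J
            = rr N (\<beta> + \<beta>') * E13 ?X (\<beta> + \<beta>') K (\<lambda>L. lift23 (\<lambda>c. Rdyn N \<beta>' (sshift N s c)) L J)"
          using lift13_mmul[OF Fp2 K] by simp
        also have "E13 ?X (\<beta> + \<beta>') K (\<lambda>L. lift23 (\<lambda>c. Rdyn N \<beta>' (sshift N s c)) L J)
            = E13 ?X (\<beta> + \<beta>') K (\<lambda>L. rr N \<beta>' * E23 (Sh ?X (L!0)) \<beta>' L (dl J))"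
          by (rule E13_cong[OF K]) (rule lift23_entry[OF Fs3 _ J])
        finally show ?thesis by (simp add: E13_scale)
      qed
      have "mmul N 3 (mmul N 3 (lift12 (\<lambda>c. Rdyn N \<beta> (sshift N s c)))
                            (lift13 (\<lambda>c. Rdyn N (\<beta> + \<beta>') s)))
                  (lift23 (\<lambda>c. Rdyn N \<beta>' (sshift N s c))) I J
          = mmul N 3 (lift12 (\<lambda>c. Rdyn N \<beta> (sshift N s c)))
              (mmul N 3 (lift13 (\<lambda>c. Rdyn N (\<beta> + \<beta>') s)) (lift23 (\<lambda>c. Rdyn N \<beta>' (sshift N s c)))) I J"
        by (rule mmul_assoc)
      also have "\<dots> = rr N \<beta> * E12 (Sh ?X (I!2)) \<beta> I (\<lambda>K. mmul N 3 (lift13 (\<lambda>c. Rdyn N (\<beta> + \<beta>') s)) (lift23 (\<lambda>c. Rdyn N \<beta>' (sshift N s c))) K J)"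
        using lift12_mmul[OF Fs1 I] by simp
      also have "E12 (Sh ?X (I!2)) \<beta> I (\<lambda>K. mmul N 3 (lift13 (\<lambda>c. Rdyn N (\<beta> + \<beta>') s)) (lift23 (\<lambda>c. Rdyn N \<beta>' (sshift N s c))) K J)
          = E12 (Sh ?X (I!2)) \<beta> I (\<lambda>K. rr N (\<beta> + \<beta>') * rr N \<beta>' * E13 ?X (\<beta> + \<beta>') K (\<lambda>L. E23 (Sh ?X (L!0)) \<beta>' L (dl J)))"
        by (rule E12_cong[OF I]) (rule inner)
      finally show ?thesis by (simp add: E12_scale LHSf_def mult.assoc)
    qed
    have R: "mmul N 3 (mmul N 3 (lift23 (\<lambda>c. Rdyn N \<beta>' s))
                            (lift13 (\<lambda>c. Rdyn N (\<beta> + \<beta>') (sshift N s c))))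
                  (lift12 (\<lambda>c. Rdyn N \<beta> s)) I J
        = rr N \<beta>' * rr N (\<beta> + \<beta>') * rr N \<beta> * RHSf ?X \<beta> \<beta>' I J"
    proof -
      have inner: "mmul N 3 (lift13 (\<lambda>c. Rdyn N (\<beta> + \<beta>') (sshift N s c))) (lift12 (\<lambda>c. Rdyn N \<beta> s)) K J
          = rr N (\<beta> + \<beta>') * rr N \<beta> * E13 (Sh ?X (K!1)) (\<beta> + \<beta>') K (\<lambda>L. E12 ?X \<beta> L (dl J))"
        if K: "K \<in> idx N 3" for K
      proof -
        have "mmul N 3 (lift13 (\<lambda>c. Rdyn N (\<beta> + \<beta>') (sshift N s c))) (lift12 (\<lambda>c. Rdyn N \<beta> s)) K J
            = rr N (\<beta> + \<beta>') * E13 (Sh ?X (K!1)) (\<beta> + \<beta>') K (\<lambda>L. lift12 (\<lambda>c. Rdyn N \<beta> s) L J)"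
          using lift13_mmul[OF Fs2 K] by simp
        also have "E13 (Sh ?X (K!1)) (\<beta> + \<beta>') K (\<lambda>L. lift12 (\<lambda>c. Rdyn N \<beta> s) L J)
            = E13 (Sh ?X (K!1)) (\<beta> + \<beta>') K (\<lambda>L. rr N \<beta> * E12 ?X \<beta> L (dl J))"
          by (rule E13_cong[OF K]) (rule lift12_entry[OF Fp1 _ J])
        finally show ?thesis by (simp add: E13_scale)
      qed
      have "mmul N 3 (mmul N 3 (lift23 (\<lambda>c. Rdyn N \<beta>' s))
                            (lift13 (\<lambda>c. Rdyn N (\<beta> + \<beta>') (sshift N s c))))
                  (lift12 (\<lambda>c. Rdyn N \<beta> s)) I J
          = mmul N 3 (lift23 (\<lambda>c. Rdyn N \<beta>' s))
              (mmul N 3 (lift13 (\<lambda>c. Rdyn N (\<beta> + \<beta>') (sshift N s c))) (lift12 (\<lambda>c. Rdyn N \<beta> s))) I J"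
        by (rule mmul_assoc)
      also have "\<dots> = rr N \<beta>' * E23 ?X \<beta>' I (\<lambda>K. mmul N 3 (lift13 (\<lambda>c. Rdyn N (\<beta> + \<beta>') (sshift N s c))) (lift12 (\<lambda>c. Rdyn N \<beta> s)) K J)"
        using lift23_mmul[OF Fp3 I] by simp
      also have "E23 ?X \<beta>' I (\<lambda>K. mmul N 3 (lift13 (\<lambda>c. Rdyn N (\<beta> + \<beta>') (sshift N s c))) (lift12 (\<lambda>c. Rdyn N \<beta> s)) K J)
          = E23 ?X \<beta>' I (\<lambda>K. rr N (\<beta> + \<beta>') * rr N \<beta> * E13 (Sh ?X (K!1)) (\<beta> + \<beta>') K (\<lambda>L. E12 ?X \<beta> L (dl J)))"
        by (rule E23_cong[OF I]) (rule inner)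
      finally show ?thesis by (simp add: E23_scale RHSf_def mult.assoc)
    qed
    have Y: "LHSf ?X \<beta> \<beta>' I J = RHSf ?X \<beta> \<beta>' I J" unfolding abc(1) by (rule ybe_core[OF g])
    show ?thesis unfolding L R Y by (simp only: mult_ac)
  qed
  show ?thesis
    apply (intro conjI)
    subgoal by (intro ballI) (rule aa)
    subgoal by (intro ballI impI) (rule ab1)
    subgoal by (intro ballI impI) (rule ab2)
    subgoal by (intro ballI impI) (rule ab3)
    subgoal by (intro ballI impI) (rule zero)
    subgoal by (intro ballI) (rule ybe)
    done
qed

end
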